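(* Consider problem (P) with $d_i=p$, $A_i=I_p$ and $\mathcal{X}_i=\mathbb{R}^p$ for all $i$, under Assumption 1, with each $f_i$ $\mu_i$-strongly convex and $l_i$-smooth. Let $\mathcal{G}(t)$ be a time-varying digraph that is strongly connected and weight-balanced at every $t\ge0$, whose adjacency matrix is piecewise constant and uniformly bounded, and let $\mathcal{S}$ index the (finitely or infinitely many) possible structures of $\mathcal{G}$, with Laplacians $L_s$ and $\hat L_s=(L_s+L_s^\top)/2$. Let $\mu=\min_i\mu_i$, $l=\max_i l_i$, $\varphi>0$, and let $\alpha\ge\max\{\frac12,\frac{(\varphi^2+3\varphi+3)+l^2+\frac32-\mu}{(\varphi+1)\mu}\}$ and $$\beta\ge\frac{2(\varphi+1)^2\alpha^2+1}{2\varphi\alpha\min_{s\in\mathcal{S}}\eta_2(\hat L_s)}.$$ Then for any initial point $(\mathbf{x}(0),\boldsymbol\lambda(0),\mathbf{z}(0))$ with $\sum_{i=1}^n z_i(0)=0$, the trajectory of IDEA with $\mathbf{L}=\mathbf{L}(t)=L(t)\otimes I_p$ converges exponentially to a point $(\mathbf{x}^*,\boldsymbol\lambda^*,\mathbf{z}^* )$, where $\mathbf{x}^*$ is the unique optimal solution of (P).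
   Context: Problem (P): for $i=1,\dots,n$ let $f_i:\mathbb{R}^{d_i}\to\mathbb{R}$, $\mathcal{X}_i\subseteq\mathbb{R}^{d_i}$, $A_i\in\mathbb{R}^{p\times d_i}$, $b\in\mathbb{R}^p$; $\mathbf{x}=[x_1^\top,\dots,x_n^\top]^\top$, $f(\mathbf{x})=\sum_i f_i(x_i)$, $A=[A_1,\dots,A_n]$, $\mathcal{X}=\prod_i\mathcal{X}_i$; (P) is $\min f(\mathbf{x})$ s.t. $A\mathbf{x}=b$, $\mathbf{x}\in\mathcal{X}$, assumed to have at least one optimal solution. Assumption 1: each $\mathcal{X}_i$ closed and convex, $f_i$ convex on $\mathcal{X}_i$ and differentiable on an open set containing $\mathcal{X}_i$ with $\nabla f_i$ locally Lipschitz there, and Slater's condition holds. $l_i$-smooth means $\nabla f_i$ is $l_i$-Lipschitz. Graph: weighted digraph with adjacency $[a_{ij}]$ ($a_{ij}>0$ if agent $i$ receives from agent $j$, else $0$); Laplacian $L=\mathrm{diag}(\sum_j a_{ij})_i-[a_{ij}]$; weight-balanced: $\sum_j a_{ji}=\sum_j a_{ij}$ for all $i$; strongly connected: directed path between any pair. $\eta_2(\cdot)$ is the second smallest eigenvalue. IDEA: choose $b_1,\dots,b_n$ with $\sum_i b_i=b$; $\mathbf{A}=\mathrm{diag}(A_1,\dots,A_n)$, $\mathbf{b}=[b_1^\top,\dots,b_n^\top]^\top$, $\nabla f(\mathbf{x})=[\nabla f_1(x_1)^\top,\dots,\nabla f_n(x_n)^\top]^\top$. IDEA is $\dot{\mathbf{x}}=-\alpha(\nabla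 f(\mathbf{x})+\mathbf{A}^\top\boldsymbol\lambda)-\mathbf{A}^\top(\mathbf{A}\mathbf{x}-\mathbf{b}-\mathbf{z})$, $\dot{\boldsymbol\lambda}=\mathbf{A}\mathbf{x}-\mathbf{b}-\mathbf{z}-\beta\mathbf{L}\boldsymbol\lambda$, $\dot{\mathbf{z}}=\alpha\beta\mathbf{L}\boldsymbol\lambda$, $\mathbf{z}=[z_1^\top,\dots,z_n^\top]^\top$. *)

theory Defs
  imports "HOL-Analysis.Analysis" "Jordan_Normal_Form.Char_Poly"
    "HOL-Computational_Algebra.Polynomial"
begin

definition strongly_convex :: "real \<Rightarrow> ('a::real_normed_vector \<Rightarrow> real) \<Rightarrow> bool" where
  "strongly_convex \<mu> f \<longleftrightarrow> (\<forall>x y. \<forall>u::real. 0 \<le> u \<and> u \<le> 1 \<longrightarrow>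
      f (u *\<^sub>R x + (1 - u) *\<^sub>R y) \<le> u * f x + (1 - u) * f y - \<mu> / 2 * u * (1 - u) * (norm (x - y))\<^sup>2)"

(* Laplacian entry of an n-agent weighted digraph with adjacency a (a i j > 0: i receives from j) *)
definition lap :: "nat \<Rightarrow> (nat \<Rightarrow> nat \<Rightarrow> real) \<Rightarrow> nat \<Rightarrow> nat \<Rightarrow> real" where
  "lap n a i j = (if i = j then (\<Sum>k<n. a i k) else 0) - a i j"

definition lap_hat :: "nat \<Rightarrow> (nat \<Rightarrow> nat \<Rightarrow> real) \<Rightarrow> real mat" where
  "lap_hat n a = Matrix.mat n n (\<lambda>(i,j). (lap n a i j + lap n a j i) / 2)"

(* second smallest eigenvalue (counted with multiplicity) of a real matrix whose
   characteristic polynomial splits over the reals (e.g. a symmetric matrix) *)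
definition eta2 :: "real mat \<Rightarrow> real" where
  "eta2 M = sorted_list_of_multiset (proots (char_poly M)) ! 1"

definition weight_balanced :: "nat \<Rightarrow> (nat \<Rightarrow> nat \<Rightarrow> real) \<Rightarrow> bool" where
  "weight_balanced n a \<longleftrightarrow> (\<forall>i<n. (\<Sum>j<n. a j i) = (\<Sum>j<n. a i j))"

definition strongly_connected :: "nat \<Rightarrow> (nat \<Rightarrow> nat \<Rightarrow> real) \<Rightarrow> bool" where
  "strongly_connected n a \<longleftrightarrow>
     (\<forall>i<n. \<forall>j<n. (i, j) \<in> {(u, v). u < n \<and> v < n \<and> a v u > 0}\<^sup>*)"

definition locally_const_at :: "(real \<Rightarrow> 'b) \<Rightarrow> real \<Rightarrow> bool" where
  "locally_const_at a t \<longleftrightarrow> (\<exists>e>0. \<forall>s\<ge>0. \<bar>s - t\<bar> < e \<longrightarrow> a s = a t)"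

definition piecewise_constant :: "(real \<Rightarrow> 'b) \<Rightarrow> bool" where
  "piecewise_constant a \<longleftrightarrow> (\<forall>T. finite {t \<in> {0..T}. \<not> locally_const_at a t})"

(* (P) with A_i = I, X_i = R^p:  min sum f_i(x_i)  s.t.  sum x_i = b *)
definition feasible :: "nat \<Rightarrow> 'a::real_vector \<Rightarrow> (nat \<Rightarrow> 'a) \<Rightarrow> bool" where
  "feasible n b x \<longleftrightarrow> (\<Sum>i<n. x i) = b"

definition optimal :: "nat \<Rightarrow> (nat \<Rightarrow> 'a::real_vector \<Rightarrow> real) \<Rightarrow> 'a \<Rightarrow> (nat \<Rightarrow> 'a) \<Rightarrow> bool" where
  "optimal n f b x \<longleftrightarrow> feasible n b x \<and>
     (\<forall>y. feasible n b y \<longrightarrow> (\<Sum>i<n. f i (x i)) \<le> (\<Sum>i<n. f i (y i)))"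

(* (x, lambda, z) is a trajectory of IDEA (A_i = I_p) on [0,oo) with time-varying graph a(t):
   continuous, and the ODE holds at every t > 0 that is not a switching instant of a *)
definition IDEA_trajectory ::
  "nat \<Rightarrow> (nat \<Rightarrow> 'a::euclidean_space \<Rightarrow> 'a) \<Rightarrow> (nat \<Rightarrow> 'a) \<Rightarrow> real \<Rightarrow> real \<Rightarrow>
   (real \<Rightarrow> nat \<Rightarrow> nat \<Rightarrow> real) \<Rightarrow>
   (real \<Rightarrow> nat \<Rightarrow> 'a) \<Rightarrow> (real \<Rightarrow> nat \<Rightarrow> 'a) \<Rightarrow> (real \<Rightarrow> nat \<Rightarrow> 'a) \<Rightarrow> bool" where
  "IDEA_trajectory n gf bb \<alpha> \<beta> a x lam z \<longleftrightarrow>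
     (\<forall>i<n. continuous_on {0..} (\<lambda>t. x t i) \<and> continuous_on {0..} (\<lambda>t. lam t i)
            \<and> continuous_on {0..} (\<lambda>t. z t i)) \<and>
     (\<forall>t>0. locally_const_at a t \<longrightarrow> (\<forall>i<n.
        ((\<lambda>s. x s i) has_vector_derivative
            (- \<alpha> *\<^sub>R (gf i (x t i) + lam t i) - (x t i - bb i - z t i))) (at t) \<and>
        ((\<lambda>s. lam s i) has_vector_derivative
            (x t i - bb i - z t i - \<beta> *\<^sub>R (\<Sum>j<n. lap n (a t) i j *\<^sub>R lam t j))) (at t) \<and>
        ((\<lambda>s. z s i) has_vector_derivative
            ((\<alpha> * \<beta>) *\<^sub>R (\<Sum>j<n. lap n (a t) i j *\<^sub>R lam t j))) (at t)))"

end

theory Submission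
  imports Defs
begin

definition qf :: "nat \<Rightarrow> (nat \<Rightarrow> nat \<Rightarrow> real) \<Rightarrow> (nat \<Rightarrow> real) \<Rightarrow> real" where
  "qf n a v = (\<Sum>i<n. \<Sum>j<n. lap n a i j * v i * v j)"

lemma lap_row_sum: "(\<Sum>j<n. lap n a i j) = 0" if "i < n"
  using that by (simp add: lap_def sum_subtractf sum.delta)

lemma lap_col_sum: assumes "weight_balanced n a" "j < n" shows "(\<Sum>i<n. lap n a i j) = 0"
  using assms by (simp add: lap_def sum_subtractf sum.delta weight_balanced_def)

lemma qf_eq: assumes wb: "weight_balanced n a"
  shows "qf n a v = (\<Sum>i<n. \<Sum>j<n. a i j * (v i - v j)^2) / 2"
proof -
  have A1: "(\<Sum>j<n. lap n a i j * v i * v j) = (\<Sum>k<n. a i k) * (v i)^2 - (\<Sum>j<n. a i j * v i * v j)" if "i < n" for i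
  proof -
    have "(\<Sum>j<n. lap n a i j * v i * v j) = (\<Sum>j<n. (if i = j then (\<Sum>k<n. a i k) * v i * v j else 0) - a i j * v i * v j)"
      unfolding lap_def by (rule sum.cong) (auto simp: algebra_simps)
    also have "\<dots> = (\<Sum>k<n. a i k) * (v i)^2 - (\<Sum>j<n. a i j * v i * v j)"
      using that by (simp add: sum_subtractf sum.delta power2_eq_square)
    finally show ?thesis .
  qed
  have A: "qf n a v = (\<Sum>i<n. (\<Sum>k<n. a i k) * (v i)^2) - (\<Sum>i<n. \<Sum>j<n. a i j * v i * v j)"
    unfolding qf_def by (simp add: A1 sum_subtractf)
  have B: "(\<Sum>i<n. \<Sum>j<n. a i j * (v j)^2) = (\<Sum>j<n. (\<Sum>i<n. a i j) * (v j)^2)"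
    by (subst sum.swap) (simp add: sum_distrib_right)
  also have "\<dots> = (\<Sum>j<n. (\<Sum>i<n. a j i) * (v j)^2)"
    using wb unfolding weight_balanced_def by simp
  finally have B: "(\<Sum>i<n. \<Sum>j<n. a i j * (v j)^2) = (\<Sum>i<n. (\<Sum>k<n. a i k) * (v i)^2)" .
  have C: "(\<Sum>i<n. \<Sum>j<n. a i j * (v i - v j)^2) =
     (\<Sum>i<n. \<Sum>j<n. a i j * (v i)^2) - 2 * (\<Sum>i<n. \<Sum>j<n. a i j * v i * v j) + (\<Sum>i<n. \<Sum>j<n. a i j * (v j)^2)"
    by (simp add: power2_diff algebra_simps sum.distrib sum_subtractf sum_distrib_left)
  have D: "(\<Sum>i<n. \<Sum>j<n. a i j * (v i)^2) = (\<Sum>i<n. (\<Sum>k<n. a i k) * (v i)^2)"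
    by (simp add: sum_distrib_right)
  show ?thesis using A B C D by simp
qed


lemma qf_nonneg: assumes wb: "weight_balanced n a" and nn: "\<And>i j. i < n \<Longrightarrow> j < n \<Longrightarrow> a i j \<ge> 0"
  shows "qf n a v \<ge> 0"
  unfolding qf_eq[OF wb] by (intro divide_nonneg_pos sum_nonneg mult_nonneg_nonneg) (auto simp: nn)

lemma qf_zero_const: assumes wb: "weight_balanced n a" and nn: "\<And>i j. i < n \<Longrightarrow> j < n \<Longrightarrow> a i j \<ge> 0"
  and sc: "strongly_connected n a" and q0: "qf n a v = 0" and ij: "i < n" "j < n"
  shows "v i = v j"
proof -
  have "(\<Sum>i<n. \<Sum>j<n. a i j * (v i - v j)^2) = 0" using q0 unfolding qf_eq[OF wb] by simp
  have nn2: "\<And>i. i \<in> {..<n} \<Longrightarrow> 0 \<le> (\<Sum>j<n. a i j * (v i - v j)^2)"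
    by (auto intro!: sum_nonneg mult_nonneg_nonneg nn)
  have Z1: "(\<Sum>j<n. a i j * (v i - v j)^2) = 0" if "i < n" for i
    using sum_nonneg_eq_0_iff[of "{..<n}" "\<lambda>i. \<Sum>j<n. a i j * (v i - v j)^2"] nn2 \<open>(\<Sum>i<n. \<Sum>j<n. a i j * (v i - v j)^2) = 0\<close> that by auto
  have Z: "a i j * (v i - v j)^2 = 0" if "i < n" "j < n" for i j
  proof -
    have "\<And>j. j \<in> {..<n} \<Longrightarrow> 0 \<le> a i j * (v i - v j)^2" using that by (auto intro!: mult_nonneg_nonneg nn)
    from sum_nonneg_eq_0_iff[of "{..<n}" "\<lambda>j. a i j * (v i - v j)^2"] this Z1[OF that(1)] that show ?thesis by auto
  qed
  have E: "a y x > 0 \<Longrightarrow> x < n \<Longrightarrow> y < n \<Longrightarrow> v y = v x" for x y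
    using Z[of y x] by auto
  have "(i, j) \<in> {(u, v). u < n \<and> v < n \<and> a v u > 0}\<^sup>*" using sc ij unfolding strongly_connected_def by auto
  hence "v j = v i"
  proof (induction rule: rtrancl_induct)
    case base then show ?case by simp
  next
    case (step y z) then show ?case using E by auto
  qed
  thus ?thesis by simp
qed

lemma qf_shift: assumes wb: "weight_balanced n a" shows "qf n a (\<lambda>i. v i + c) = qf n a v"
  unfolding qf_eq[OF wb] by simp

lemma bw_multi: fixes X :: "nat \<Rightarrow> nat \<Rightarrow> real" and m :: nat shows "(\<forall>k i. i < m \<longrightarrow> \<bar>X k i\<bar> \<le> (B::real)) \<Longrightarrow>
    \<exists>r. strict_mono r \<and> (\<forall>i<m. \<exists>l. (\<lambda>k. X (r k) i) \<longlonglongrightarrow> l)"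
proof (induction m)
  case 0 show ?case by (rule exI[of _ id]) (auto simp: strict_mono_def)
next
  case (Suc m)
  then obtain r where r: "strict_mono r" and cv: "\<forall>i<m. \<exists>l. (\<lambda>k. X (r k) i) \<longlonglongrightarrow> l" by auto
  obtain r' where r': "strict_mono r'" and mono: "monoseq (\<lambda>k. X (r (r' k)) m)"
    using seq_monosub[of "\<lambda>k. X (r k) m"] by auto
  have "Bseq (\<lambda>k. X (r (r' k)) m)" using Suc.prems by (intro BseqI'[of _ B]) auto
  then have "convergent (\<lambda>k. X (r (r' k)) m)" using mono Bseq_monoseq_convergent by blast
  then obtain lm where lm: "(\<lambda>k. X (r (r' k)) m) \<longlonglongrightarrow> lm" by (auto simp: convergent_def)
  have "\<forall>i<Suc m. \<exists>l. (\<lambda>k. X ((r \<circ> r') k) i) \<longlonglongrightarrow> l"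
  proof (intro allI impI)
    fix i assume "i < Suc m"
    show "\<exists>l. (\<lambda>k. X ((r \<circ> r') k) i) \<longlonglongrightarrow> l"
    proof (cases "i = m")
      case True then show ?thesis using lm by auto
    next
      case False
      then have "i < m" using \<open>i < Suc m\<close> by simp
      then obtain l where "(\<lambda>k. X (r k) i) \<longlonglongrightarrow> l" using cv by blast
      then have "(\<lambda>k. X (r (r' k)) i) \<longlonglongrightarrow> l" using LIMSEQ_subseq_LIMSEQ[OF _ r'] by (auto simp: o_def)
      then show ?thesis by auto
    qed
  qed
  moreover have "strict_mono (r \<circ> r')" using r r' by (simp add: strict_mono_o)
  ultimately show ?case by blast
qed


definition Mf :: "nat \<Rightarrow> (nat \<Rightarrow> nat \<Rightarrow> real) \<Rightarrow> nat \<Rightarrow> nat \<Rightarrow> real" where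
  "Mf n a i j = (lap n a i j + lap n a j i) / 2"

lemma qf_sym: "(\<Sum>i<n. \<Sum>j<n. Mf n a i j * f i * f j) = qf n a f"
proof -
  have "(\<Sum>i<n. \<Sum>j<n. lap n a j i * f i * f j) = (\<Sum>i<n. \<Sum>j<n. lap n a i j * f i * f j)"
    by (subst sum.swap) (simp add: algebra_simps)
  then show ?thesis unfolding Mf_def qf_def
    by (simp add: add_divide_distrib sum.distrib algebra_simps sum_divide_distrib[symmetric])
qed

lemma qf_expand: "qf n a (\<lambda>i. v i + t * u i) =
   qf n a v + 2 * t * (\<Sum>i<n. u i * (\<Sum>j<n. Mf n a i j * v j)) + t^2 * qf n a u"
proof -
  have sw: "(\<Sum>i<n. \<Sum>j<n. lap n a i j * v i * u j) = (\<Sum>i<n. \<Sum>j<n. lap n a j i * u i * v j)"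
    by (subst sum.swap) (simp add: algebra_simps)
  have "2 * (\<Sum>i<n. u i * (\<Sum>j<n. Mf n a i j * v j)) =
      (\<Sum>i<n. \<Sum>j<n. lap n a i j * u i * v j) + (\<Sum>i<n. \<Sum>j<n. lap n a j i * u i * v j)"
    unfolding Mf_def by (simp add: sum_distrib_left sum.distrib algebra_simps sum_divide_distrib[symmetric])
  also have "\<dots> = (\<Sum>i<n. \<Sum>j<n. lap n a i j * u i * v j) + (\<Sum>i<n. \<Sum>j<n. lap n a i j * v i * u j)"
    using sw by simp
  finally have X: "2 * (\<Sum>i<n. u i * (\<Sum>j<n. Mf n a i j * v j)) = \<dots>" .
  have "qf n a (\<lambda>i. v i + t * u i) = qf n a v + t * ((\<Sum>i<n. \<Sum>j<n. lap n a i j * u i * v j) + (\<Sum>i<n. \<Sum>j<n. lap n a i j * v i * u j)) + t^2 * qf n a u"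
    unfolding qf_def by (simp add: algebra_simps sum.distrib sum_distrib_left power2_eq_square)
  then show ?thesis using X by (simp add: algebra_simps)
qed

lemma sq_expand: fixes v u :: "nat \<Rightarrow> real" shows "(\<Sum>i<n. (v i + t * u i)^2) = (\<Sum>i<n. (v i)^2) + 2 * t * (\<Sum>i<n. u i * v i) + t^2 * (\<Sum>i<n. (u i)^2)"
  by (simp add: algebra_simps sum.distrib sum_distrib_left power2_eq_square)

lemma quad_zero: fixes B C :: real assumes "\<And>t. 0 \<le> 2 * t * B + t^2 * C" shows "B = 0"
proof (rule ccontr)
  assume nz: "B \<noteq> 0"
  define K where "K = \<bar>C\<bar> + 1"
  have K: "K > 0" "\<bar>C\<bar> \<le> K" unfolding K_def by auto
  define t where "t = - B / K"
  have "t^2 * C \<le> t^2 * K" using K by (intro mult_left_mono) auto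
  also have "\<dots> = B^2 / K" unfolding t_def using K by (simp add: power2_eq_square field_simps)
  finally have h1: "t^2 * C \<le> B^2 / K" .
  have h2: "2 * t * B = - 2 * B^2 / K" unfolding t_def using K by (simp add: power2_eq_square field_simps)
  have h3: "B^2 / K > 0" using K nz by simp
  have "2 * t * B + t^2 * C < 0" using h1 h2 h3 by linarith
  then show False using assms[of t] by simp
qed

lemma sorted_second: fixes M :: "real multiset"
  assumes "0 \<in># M" "c \<in># M" "0 < c" "\<forall>x\<in>#M. 0 \<le> x"
  shows "0 \<le> sorted_list_of_multiset M ! 1 \<and> sorted_list_of_multiset M ! 1 \<le> c"
proof -
  define s where "s = sorted_list_of_multiset M"
  have ss: "sorted s" and ms: "mset s = M" unfolding s_def by auto
  have set_s: "set s = set_mset M" using ms by (metis set_mset_mset)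
  obtain k0 where k0: "k0 < length s" "s ! k0 = 0" using assms(1) set_s by (metis in_set_conv_nth)
  obtain kc where kc: "kc < length s" "s ! kc = c" using assms(2) set_s by (metis in_set_conv_nth)
  have ne: "k0 \<noteq> kc" using k0 kc assms(3) by auto
  have len: "1 < length s" using k0 kc ne by linarith
  have "s ! 1 \<in> set_mset M" using len set_s by (metis nth_mem)
  then have g0: "0 \<le> s ! 1" using assms(4) by auto
  have "s ! 1 \<le> s ! (max k0 kc)" using ss len ne k0 kc by (intro sorted_nth_mono) auto
  also have "\<dots> \<le> c" using k0 kc assms(3) by (cases "k0 \<le> kc") (auto simp: max_def)
  finally show ?thesis using g0 unfolding s_def by simp
qed


lemma qf_scale: "qf n a (\<lambda>i. t * v i) = t^2 * qf n a v"
  unfolding qf_def by (simp add: sum_distrib_left algebra_simps power2_eq_square)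

lemma spectral_min:
  assumes n2: "n \<ge> 2" and wb: "weight_balanced n a"
    and nn: "\<And>i j. i < n \<Longrightarrow> j < n \<Longrightarrow> a i j \<ge> 0"
    and sc: "strongly_connected n a"
  shows "\<exists>c v0. c > 0 \<and> (\<Sum>i<n. v0 i) = 0 \<and> (\<Sum>i<n. (v0 i)^2) = 1 \<and>
     (\<forall>i<n. (\<Sum>j<n. Mf n a i j * v0 j) = c * v0 i) \<and>
     (\<forall>v. (\<Sum>i<n. v i) = 0 \<longrightarrow> c * (\<Sum>i<n. (v i)^2) \<le> qf n a v)"
proof -
  define S where "S = {v::nat \<Rightarrow> real. (\<Sum>i<n. v i) = 0 \<and> (\<Sum>i<n. (v i)^2) = 1}"
  define c where "c = Inf (qf n a ` S)"
  define s where "s = 1 / sqrt 2"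
  define w where "w = (\<lambda>i::nat. (if i = 0 then s else 0) + (if i = 1 then - s else 0))"
  have n01: "0 \<in> {..<n}" "1 \<in> {..<n}" using n2 by auto
  have "(\<Sum>i<n. w i) = 0" unfolding w_def using n01 by (simp add: sum.distrib)
  moreover have "(\<Sum>i<n. (w i)^2) = 1"
  proof -
    have "(\<Sum>i<n. (w i)^2) = (\<Sum>i<n. (if i = 0 then s^2 else 0) + (if i = 1 then s^2 else 0))"
      unfolding w_def by (rule sum.cong) auto
    also have "\<dots> = 2 * s^2" using n01 by (simp add: sum.distrib)
    also have "\<dots> = 1" unfolding s_def by (simp add: power_divide)
    finally show ?thesis .
  qed
  ultimately have "w \<in> S" unfolding S_def by auto
  then have Sne: "qf n a ` S \<noteq> {}" by auto
  have bdd: "bdd_below (qf n a ` S)" using qf_nonneg[OF wb nn] by (auto intro: bdd_belowI[of _ 0])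
  have lower: "c \<le> qf n a v" if "v \<in> S" for v
    unfolding c_def using bdd that by (auto intro: cInf_lower)
  have "\<forall>k::nat. \<exists>v. v \<in> S \<and> qf n a v < c + 1 / Suc k"
  proof
    fix k :: nat
    have "Inf (qf n a ` S) < c + 1 / Suc k" unfolding c_def by simp
    from cInf_lessD[OF Sne this] show "\<exists>v. v \<in> S \<and> qf n a v < c + 1 / Suc k" by auto
  qed
  then obtain X where X: "\<And>k. X k \<in> S" "\<And>k. qf n a (X k) < c + 1 / Suc k" by metis
  have Xb: "\<forall>k i. i < n \<longrightarrow> \<bar>X k i\<bar> \<le> 1"
  proof (intro allI impI)
    fix k i assume "i < n"
    have "(X k i)^2 \<le> (\<Sum>j<n. (X k j)^2)" using \<open>i < n\<close> by (intro member_le_sum) auto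
    also have "\<dots> = 1" using X(1)[of k] unfolding S_def by auto
    finally show "\<bar>X k i\<bar> \<le> 1" by (simp add: abs_le_square_iff[of _ 1, simplified])
  qed
  from bw_multi[OF Xb] obtain r where r: "strict_mono r" and cv: "\<forall>i<n. \<exists>l. (\<lambda>k. X (r k) i) \<longlonglongrightarrow> l"
    by blast
  define v0 where "v0 i = (if i < n then lim (\<lambda>k. X (r k) i) else 0)" for i
  have lim0: "(\<lambda>k. X (r k) i) \<longlonglongrightarrow> v0 i" if "i < n" for i
    using cv that unfolding v0_def by (auto simp: convergent_LIMSEQ_iff[symmetric] convergent_def)
  have "(\<lambda>k. \<Sum>i<n. X (r k) i) \<longlonglongrightarrow> (\<Sum>i<n. v0 i)" by (intro tendsto_sum lim0) auto
  moreover have "(\<lambda>k. \<Sum>i<n. X (r k) i) = (\<lambda>k. 0)" using X(1) unfolding S_def by auto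
  ultimately have v0s: "(\<Sum>i<n. v0 i) = 0" by (simp add: LIMSEQ_const_iff)
  have "(\<lambda>k. \<Sum>i<n. (X (r k) i)^2) \<longlonglongrightarrow> (\<Sum>i<n. (v0 i)^2)" by (intro tendsto_sum tendsto_power lim0) auto
  moreover have "(\<lambda>k. \<Sum>i<n. (X (r k) i)^2) = (\<lambda>k. 1)" using X(1) unfolding S_def by auto
  ultimately have v0q: "(\<Sum>i<n. (v0 i)^2) = 1" by (simp add: LIMSEQ_const_iff)
  have "(\<lambda>k. qf n a (X (r k))) \<longlonglongrightarrow> qf n a v0"
    unfolding qf_def by (intro tendsto_sum tendsto_mult tendsto_const lim0) auto
  moreover have "(\<lambda>k. qf n a (X k)) \<longlonglongrightarrow> c"
  proof (rule tendsto_sandwich[of "\<lambda>k. c" _ _ "\<lambda>k. c + 1 / Suc k"])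
    show "\<forall>\<^sub>F k in sequentially. c \<le> qf n a (X k)" using lower X(1) by auto
    show "\<forall>\<^sub>F k in sequentially. qf n a (X k) \<le> c + 1 / Suc k" using X(2) less_imp_le by (intro always_eventually) blast
    show "(\<lambda>k. c) \<longlonglongrightarrow> c" by simp
    have "(\<lambda>k. 1 / real (Suc k)) \<longlonglongrightarrow> 0" using LIMSEQ_inverse_real_of_nat by (simp add: inverse_eq_divide)
    then show "(\<lambda>k. c + 1 / real (Suc k)) \<longlonglongrightarrow> c" using tendsto_add[of "\<lambda>k. c" c] by fastforce
  qed
  then have "(\<lambda>k. qf n a (X (r k))) \<longlonglongrightarrow> c" using LIMSEQ_subseq_LIMSEQ[OF _ r] by (auto simp: o_def)
  ultimately have qv0: "qf n a v0 = c" using LIMSEQ_unique by blast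
  have v0S: "v0 \<in> S" using v0s v0q unfolding S_def by auto
  have scale: "c * (\<Sum>i<n. (v i)^2) \<le> qf n a v" if vs: "(\<Sum>i<n. v i) = 0" for v
  proof (cases "(\<Sum>i<n. (v i)^2) = 0")
    case True then show ?thesis using qf_nonneg[OF wb nn] by simp
  next
    case False
    define q where "q = (\<Sum>i<n. (v i)^2)"
    have "q \<ge> 0" unfolding q_def by (simp add: sum_nonneg)
    then have q: "q > 0" using False unfolding q_def by simp
    define u where "u i = (1 / sqrt q) * v i" for i
    have "(\<Sum>i<n. u i) = 0" unfolding u_def using vs by (simp add: sum_divide_distrib[symmetric])
    moreover have "(\<Sum>i<n. (u i)^2) = 1" unfolding u_def using q
      by (simp add: power_divide sum_divide_distrib[symmetric] q_def[symmetric])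
    ultimately have "u \<in> S" unfolding S_def by auto
    then have "c \<le> qf n a u" by (rule lower)
    also have "qf n a u = qf n a v / q" unfolding u_def qf_scale using q by (simp add: power_divide)
    finally show ?thesis using q unfolding q_def[symmetric] by (simp add: field_simps)
  qed
  have c0: "c \<ge> 0" using qv0 qf_nonneg[OF wb nn, of v0] by simp
  have cpos: "c > 0"
  proof (rule ccontr)
    assume "\<not> c > 0" then have "c = 0" using c0 by simp
    then have "qf n a v0 = 0" using qv0 by simp
    then have eq: "v0 i = v0 0" if "i < n" for i using qf_zero_const[OF wb nn sc \<open>qf n a v0 = 0\<close> that, of 0] n2 by simp
    have eq2: "\<forall>i\<in>{..<n}. v0 i = v0 0" using eq by blast
    have "(\<Sum>i<n. v0 i) = (\<Sum>i<n. v0 0)" using sum.cong[OF refl, of "{..<n}" v0 "\<lambda>_. v0 0"] eq2 by blast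
    then have "v0 0 = 0" using v0s n2 by simp
    then have eq3: "\<forall>i\<in>{..<n}. (v0 i)^2 = 0" using eq2 by simp
    have "(\<Sum>i<n. (v0 i)^2) = 0" using sum.neutral[OF eq3] .
    then show False using v0q by simp
  qed
  define rr where "rr i = (\<Sum>j<n. Mf n a i j * v0 j) - c * v0 i" for i
  have orth: "(\<Sum>i<n. u i * rr i) = 0" if us: "(\<Sum>i<n. u i) = 0" for u
  proof -
    define B where "B = (\<Sum>i<n. u i * (\<Sum>j<n. Mf n a i j * v0 j))"
    have "0 \<le> 2 * t * (B - c * (\<Sum>i<n. u i * v0 i)) + t^2 * (qf n a u - c * (\<Sum>i<n. (u i)^2))" for t
    proof -
      have "(\<Sum>i<n. v0 i + t * u i) = 0" using us v0s by (simp add: sum.distrib sum_distrib_left[symmetric])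
      from scale[OF this] have "c * (\<Sum>i<n. (v0 i + t * u i)^2) \<le> qf n a (\<lambda>i. v0 i + t * u i)" .
      then show ?thesis unfolding sq_expand qf_expand B_def[symmetric] qv0 v0q by (simp add: algebra_simps)
    qed
    from quad_zero[OF this] have "B = c * (\<Sum>i<n. u i * v0 i)" by simp
    then show ?thesis unfolding rr_def B_def by (simp add: algebra_simps sum_subtractf sum_distrib_left)
  qed
  have colM: "(\<Sum>i<n. Mf n a i j) = 0" if "j < n" for j
    unfolding Mf_def using lap_row_sum[OF that] lap_col_sum[OF wb that]
    by (simp add: sum.distrib sum_divide_distrib[symmetric])
  have "(\<Sum>i<n. rr i) = 0"
  proof -
    have "(\<Sum>i<n. \<Sum>j<n. Mf n a i j * v0 j) = (\<Sum>j<n. (\<Sum>i<n. Mf n a i j) * v0 j)"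
      by (subst sum.swap) (simp add: sum_distrib_right)
    also have "\<dots> = 0" using colM by simp
    finally show ?thesis unfolding rr_def using v0s by (simp add: sum_subtractf sum_distrib_left[symmetric])
  qed
  from orth[OF this] have "(\<Sum>i<n. (rr i)^2) = 0" by (simp add: power2_eq_square)
  then have "\<forall>i\<in>{..<n}. (rr i)^2 = 0" by (subst (asm) sum_nonneg_eq_0_iff) auto
  then have eig: "\<forall>i<n. (\<Sum>j<n. Mf n a i j * v0 j) = c * v0 i" unfolding rr_def by auto
  show ?thesis using cpos v0s v0q eig scale by blast
qed


lemma lap_hat_carrier: "lap_hat n a \<in> carrier_mat n n" unfolding lap_hat_def by simp

lemma lap_hat_mulv: assumes "i < n"
  shows "(lap_hat n a *\<^sub>v Matrix.vec n f) $ i = (\<Sum>j<n. Mf n a i j * f j)"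
proof -
  have "(lap_hat n a *\<^sub>v Matrix.vec n f) $ i = row (lap_hat n a) i \<bullet> Matrix.vec n f"
    using assms lap_hat_carrier[of n a] by simp
  also have "\<dots> = (\<Sum>j\<in>{0..<n}. lap_hat n a $$ (i, j) * f j)"
    unfolding scalar_prod_def using assms lap_hat_carrier[of n a] by (intro sum.cong) auto
  also have "\<dots> = (\<Sum>j<n. Mf n a i j * f j)"
    unfolding lap_hat_def Mf_def using assms by (intro sum.cong) (auto simp: lessThan_atLeast0)
  finally show ?thesis .
qed

lemma proots_mem: fixes p :: "real poly" assumes "p \<noteq> 0" shows "x \<in># proots p \<longleftrightarrow> poly p x = 0"
proof -
  have "x \<in># proots p \<longleftrightarrow> count (proots p) x \<noteq> 0" by (simp add: count_eq_zero_iff)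
  also have "\<dots> \<longleftrightarrow> order x p \<noteq> 0" using count_proots[OF assms, of x] by simp
  also have "\<dots> \<longleftrightarrow> poly p x = 0" using order_root[of p x] assms by simp
  finally show ?thesis .
qed

lemma eta2_props:
  assumes n2: "n \<ge> 2" and wb: "weight_balanced n a"
    and nn: "\<And>i j. i < n \<Longrightarrow> j < n \<Longrightarrow> a i j \<ge> 0"
    and sc: "strongly_connected n a"
  shows "eta2 (lap_hat n a) \<ge> 0"
    and "\<And>v. (\<Sum>i<n. v i) = 0 \<Longrightarrow> eta2 (lap_hat n a) * (\<Sum>i<n. (v i)^2) \<le> qf n a v"
proof -
  obtain c v0 where c: "c > 0" and v0s: "(\<Sum>i<n. v0 i) = 0" and v0q: "(\<Sum>i<n. (v0 i)^2) = 1"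
    and eig: "\<forall>i<n. (\<Sum>j<n. Mf n a i j * v0 j) = c * v0 i"
    and scale: "\<forall>v. (\<Sum>i<n. v i) = 0 \<longrightarrow> c * (\<Sum>i<n. (v i)^2) \<le> qf n a v"
    using spectral_min[OF n2 wb nn sc] by blast
  define M where "M = lap_hat n a"
  have MC: "M \<in> carrier_mat n n" unfolding M_def by (rule lap_hat_carrier)
  define p where "p = char_poly M"
  have p0: "p \<noteq> 0" using degree_monic_char_poly[OF MC] n2 unfolding p_def by auto
  have vne: "Matrix.vec n f \<noteq> 0\<^sub>v n" if "i < n" "f i \<noteq> 0" for f :: "nat \<Rightarrow> real" and i
  proof
    assume "Matrix.vec n f = 0\<^sub>v n"
    then have "Matrix.vec n f $ i = 0\<^sub>v n $ i" by simp
    then show False using that by simp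
  qed
  obtain i0 where i0: "i0 < n" "v0 i0 \<noteq> 0"
  proof (rule ccontr)
    assume "\<not> thesis"
    then have "\<forall>i\<in>{..<n}. (v0 i)^2 = 0" using that by auto
    then show False using v0q sum.neutral by (metis zero_neq_one)
  qed
  have "eigenvector M (Matrix.vec n v0) c"
    unfolding eigenvector_def using MC vne[of i0 v0, OF i0]
    by (auto intro!: eq_vecI simp: M_def lap_hat_mulv eig)
  then have "eigenvalue M c" unfolding eigenvalue_def by blast
  then have rc: "poly p c = 0" unfolding p_def using eigenvalue_root_char_poly[OF MC] by simp
  have rowM: "(\<Sum>j<n. Mf n a i j) = 0" if "i < n" for i
    unfolding Mf_def using lap_row_sum[OF that] lap_col_sum[OF wb that]
    by (simp add: sum.distrib sum_divide_distrib[symmetric])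
  have v1: "Matrix.vec n (\<lambda>_. 1::real) \<noteq> 0\<^sub>v n" using vne[of 0 "\<lambda>_. 1"] n2 by simp
  have "eigenvector M (Matrix.vec n (\<lambda>_. 1)) 0"
    unfolding eigenvector_def using MC v1
    by (auto intro!: eq_vecI simp: M_def lap_hat_mulv rowM)
  then have "eigenvalue M 0" unfolding eigenvalue_def by blast
  then have r0: "poly p 0 = 0" unfolding p_def using eigenvalue_root_char_poly[OF MC] by simp
  have allnn: "\<forall>x\<in>#proots p. 0 \<le> x"
  proof
    fix x assume "x \<in># proots p"
    then have "poly p x = 0" using proots_mem[OF p0] by simp
    then have "eigenvalue M x" unfolding p_def using eigenvalue_root_char_poly[OF MC] by simp
    then obtain w where w: "eigenvector M w x" unfolding eigenvalue_def by blast
    then have wc: "w \<in> carrier_vec n" and wne: "w \<noteq> 0\<^sub>v n" and ev: "M *\<^sub>v w = x \<cdot>\<^sub>v w"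
      unfolding eigenvector_def using MC by auto
    define f where "f i = w $ i" for i
    have wf: "w = Matrix.vec n f" using wc unfolding f_def by (auto intro!: eq_vecI)
    have fe: "(\<Sum>j<n. Mf n a i j * f j) = x * f i" if "i < n" for i
    proof -
      have "(M *\<^sub>v w) $ i = (x \<cdot>\<^sub>v w) $ i" using ev by simp
      then show ?thesis unfolding M_def wf lap_hat_mulv[OF that] using that by simp
    qed
    have "qf n a f = (\<Sum>i<n. \<Sum>j<n. Mf n a i j * f i * f j)" by (simp add: qf_sym)
    also have "\<dots> = (\<Sum>i<n. f i * (\<Sum>j<n. Mf n a i j * f j))"
      by (simp add: sum_distrib_left algebra_simps)
    also have "\<dots> = (\<Sum>i<n. x * (f i)^2)" using fe by (simp add: power2_eq_square algebra_simps)
    finally have qx: "qf n a f = x * (\<Sum>i<n. (f i)^2)" by (simp add: sum_distrib_left)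
    obtain i1 where i1: "i1 < n" "f i1 \<noteq> 0"
    proof (rule ccontr)
      assume "\<not> thesis"
      then have "\<forall>i<n. f i = 0" using that by auto
      then have "w = 0\<^sub>v n" unfolding wf by (auto intro!: eq_vecI)
      then show False using wne by simp
    qed
    have "(f i1)^2 \<le> (\<Sum>i<n. (f i)^2)" using i1 by (intro member_le_sum) auto
    moreover have "(f i1)^2 > 0" using i1 by simp
    ultimately have pos: "(\<Sum>i<n. (f i)^2) > 0" by linarith
    have "0 \<le> qf n a f" by (rule qf_nonneg[OF wb nn])
    then show "0 \<le> x" using qx pos by (simp add: zero_le_mult_iff)
  qed
  have ss: "0 \<le> sorted_list_of_multiset (proots p) ! 1 \<and> sorted_list_of_multiset (proots p) ! 1 \<le> c"
  proof -
    have m0: "0 \<in># proots p" using proots_mem[OF p0] r0 by blast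
    have mc: "c \<in># proots p" using proots_mem[OF p0] rc by blast
    show ?thesis by (rule sorted_second[OF m0 mc c allnn])
  qed
  have e2: "eta2 (lap_hat n a) = sorted_list_of_multiset (proots p) ! 1"
    unfolding eta2_def p_def M_def ..
  show "eta2 (lap_hat n a) \<ge> 0" unfolding e2 using ss by (rule conjunct1)
  show "eta2 (lap_hat n a) * (\<Sum>i<n. (v i)^2) \<le> qf n a v" if "(\<Sum>i<n. v i) = 0" for v
  proof -
    have "eta2 (lap_hat n a) * (\<Sum>i<n. (v i)^2) \<le> c * (\<Sum>i<n. (v i)^2)"
      unfolding e2 using conjunct2[OF ss] by (intro mult_right_mono) (auto intro: sum_nonneg)
    also have "\<dots> \<le> qf n a v" using scale that by blast
    finally show ?thesis .
  qed
qed


lemma line_deriv: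
  fixes f :: "'a::real_inner \<Rightarrow> real"
  assumes gd: "GDERIV f p :> gp"
  shows "((\<lambda>t. f (p + t *\<^sub>R q)) has_real_derivative inner q gp) (at 0)"
proof -
  have l: "((\<lambda>t. p + t *\<^sub>R q) has_derivative (\<lambda>h. h *\<^sub>R q)) (at 0)"
    by (auto intro!: derivative_eq_intros)
  have g: "(f has_derivative (\<lambda>h. inner h gp)) (at (p + 0 *\<^sub>R q))" using gd by (simp add: gderiv_def)
  have "((\<lambda>t. f (p + t *\<^sub>R q)) has_derivative (\<lambda>h. inner (h *\<^sub>R q) gp)) (at 0)"
    using has_derivative_compose[OF l g] by simp
  moreover have "(\<lambda>h. inner (h *\<^sub>R q) gp) = (*) (inner q gp)" by (auto simp: fun_eq_iff)
  ultimately show ?thesis by (simp add: has_field_derivative_def)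
qed

lemma sc_first_order:
  fixes f :: "'a::real_inner \<Rightarrow> real"
  assumes sc: "strongly_convex \<mu> f" and gd: "GDERIV f x :> gx"
  shows "f y \<ge> f x + inner (y - x) gx + \<mu> / 2 * (norm (y - x))^2"
proof -
  define d where "d = y - x"
  define F where "F u = f (x + u *\<^sub>R d)" for u
  have "(F has_real_derivative inner d gx) (at 0)" unfolding F_def by (rule line_deriv[OF gd])
  then have "((\<lambda>u. (F u - F 0) / (u - 0)) \<longlongrightarrow> inner d gx) (at 0)"
    by (simp add: has_field_derivative_iff)
  then have lim1: "((\<lambda>u. (F u - F 0) / u) \<longlongrightarrow> inner d gx) (at_right 0)"
    by (auto intro: tendsto_mono[OF at_le])
  have lim2: "((\<lambda>u. f y - f x - \<mu> / 2 * (1 - u) * (norm d)^2) \<longlongrightarrow> f y - f x - \<mu> / 2 * (1 - 0) * (norm d)^2) (at_right 0)"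
    by (intro tendsto_intros)
  have ev: "\<forall>\<^sub>F u in at_right 0. (F u - F 0) / u \<le> f y - f x - \<mu> / 2 * (1 - u) * (norm d)^2"
  proof -
    show ?thesis
    proof (rule eventually_at_rightI[of 0 1])
      fix u :: real assume "u \<in> {0<..<1}"
      then have elim: "0 < u" "u < 1" by auto
      have "x + u *\<^sub>R d = u *\<^sub>R y + (1 - u) *\<^sub>R x" unfolding d_def by (simp add: algebra_simps)
      then have "F u \<le> u * f y + (1 - u) * f x - \<mu> / 2 * u * (1 - u) * (norm (y - x))^2"
        using sc elim unfolding strongly_convex_def F_def by auto
      then have "F u - F 0 \<le> u * (f y - f x - \<mu> / 2 * (1 - u) * (norm d)^2)"
        unfolding F_def d_def by (simp add: algebra_simps)
      then show "(F u - F 0) / u \<le> f y - f x - \<mu> / 2 * (1 - u) * (norm d)^2" using elim by (simp add: divide_le_eq mult.commute)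
    qed simp
  qed
  have "inner d gx \<le> f y - f x - \<mu> / 2 * (1 - 0) * (norm d)^2"
    by (rule tendsto_le[OF _ lim2 lim1 ev]) simp
  then show ?thesis unfolding d_def by simp
qed

lemma sc_mono:
  fixes f :: "'a::real_inner \<Rightarrow> real"
  assumes sc: "strongly_convex \<mu> f" and gx: "GDERIV f x :> gx" and gy: "GDERIV f y :> gy"
  shows "inner (x - y) (gx - gy) \<ge> \<mu> * (norm (x - y))^2"
proof -
  have 1: "f y \<ge> f x + inner (y - x) gx + \<mu> / 2 * (norm (y - x))^2" by (rule sc_first_order[OF sc gx])
  have 2: "f x \<ge> f y + inner (x - y) gy + \<mu> / 2 * (norm (x - y))^2" by (rule sc_first_order[OF sc gy])
  have "norm (y - x) = norm (x - y)" by (rule norm_minus_commute)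
  moreover have "inner (y - x) gx = - inner (x - y) gx" by (simp add: inner_diff_left)
  ultimately show ?thesis using 1 2 by (simp add: inner_diff_right)
qed


lemma kkt:
  fixes f :: "nat \<Rightarrow> 'a::real_inner \<Rightarrow> real"
  assumes grad: "\<And>i y. i < n \<Longrightarrow> GDERIV (f i) y :> gf i y"
    and opt: "optimal n f b xo" and i: "i < n"
  shows "gf i (xo i) = gf 0 (xo 0)"
proof (cases "i = 0")
  case True then show ?thesis by simp
next
  case False
  have n0: "0 < n" using i by simp
  define d where "d = gf i (xo i) - gf 0 (xo 0)"
  define dy where "dy k = (if k = i then d else 0) - (if k = 0 then d else 0)" for k
  define y where "y t k = xo k + t *\<^sub>R dy k" for t k
  have sdy: "(\<Sum>k<n. dy k) = 0" unfolding dy_def using i n0 by (simp add: sum_subtractf)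
  have feas: "feasible n b (y t)" for t
  proof -
    have "(\<Sum>k<n. y t k) = (\<Sum>k<n. xo k) + t *\<^sub>R (\<Sum>k<n. dy k)"
      unfolding y_def by (simp add: sum.distrib scaleR_sum_right)
    then show ?thesis using opt sdy unfolding optimal_def feasible_def by simp
  qed
  define \<Phi> where "\<Phi> t = (\<Sum>k<n. f k (y t k))" for t
  have min: "\<Phi> 0 \<le> \<Phi> t" for t
  proof -
    have "y 0 = xo" unfolding y_def by (auto simp: fun_eq_iff)
    then show ?thesis using opt feas[of t] unfolding optimal_def \<Phi>_def by auto
  qed
  have "(\<Phi> has_real_derivative (\<Sum>k<n. inner (dy k) (gf k (xo k)))) (at 0)"
    unfolding \<Phi>_def y_def by (intro DERIV_sum line_deriv grad) auto
  moreover have "(\<Sum>k<n. inner (dy k) (gf k (xo k))) = inner d d"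
  proof -
    have pw: "inner (dy k) (gf k (xo k)) = (if k = i then inner d (gf i (xo i)) else 0) - (if k = 0 then inner d (gf 0 (xo 0)) else 0)" for k
      unfolding dy_def by (simp add: inner_diff_left)
    have "(\<Sum>k<n. inner (dy k) (gf k (xo k))) = inner d (gf i (xo i)) - inner d (gf 0 (xo 0))"
      unfolding pw using i n0 by (simp add: sum_subtractf)
    also have "\<dots> = inner d d" unfolding d_def by (simp add: inner_diff_right)
    finally show ?thesis .
  qed
  ultimately have "(\<Phi> has_real_derivative inner d d) (at 0)" by simp
  from DERIV_local_min[OF this, of 1] min have "inner d d = 0" by auto
  then show ?thesis unfolding d_def by simp
qed

lemma uniq:
  fixes f :: "nat \<Rightarrow> 'a::real_inner \<Rightarrow> real"
  assumes grad: "\<And>i y. i < n \<Longrightarrow> GDERIV (f i) y :> gf i y"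
    and sconv: "\<And>i. i < n \<Longrightarrow> \<mu>i i > 0 \<and> strongly_convex (\<mu>i i) (f i)"
    and opt: "optimal n f b xo" and opty: "optimal n f b y" and i: "i < n"
  shows "y i = xo i"
proof -
  define g0 where "g0 = gf 0 (xo 0)"
  have g: "gf k (xo k) = g0" if "k < n" for k using kkt[OF grad opt that] unfolding g0_def by simp
  have fo: "f k (y k) \<ge> f k (xo k) + inner (y k - xo k) g0 + \<mu>i k / 2 * (norm (y k - xo k))^2" if "k < n" for k
    using sc_first_order[OF conjunct2[OF sconv[OF that]] grad[OF that, of "xo k"], of "y k"] g[OF that] by simp
  have s1: "(\<Sum>k<n. f k (y k)) \<ge> (\<Sum>k<n. f k (xo k)) + (\<Sum>k<n. inner (y k - xo k) g0) + (\<Sum>k<n. \<mu>i k / 2 * (norm (y k - xo k))^2)"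
    using sum_mono[of "{..<n}" "\<lambda>k. f k (xo k) + inner (y k - xo k) g0 + \<mu>i k / 2 * (norm (y k - xo k))^2" "\<lambda>k. f k (y k)"] fo
    by (simp add: sum.distrib)
  have "(\<Sum>k<n. inner (y k - xo k) g0) = inner ((\<Sum>k<n. y k) - (\<Sum>k<n. xo k)) g0"
    by (simp add: inner_sum_left[symmetric] sum_subtractf)
  also have "\<dots> = 0" using opt opty unfolding optimal_def feasible_def by simp
  finally have s2: "(\<Sum>k<n. inner (y k - xo k) g0) = 0" .
  have s3: "(\<Sum>k<n. f k (y k)) \<le> (\<Sum>k<n. f k (xo k))" using opt opty unfolding optimal_def by auto
  have nn: "\<And>k. k \<in> {..<n} \<Longrightarrow> 0 \<le> \<mu>i k / 2 * (norm (y k - xo k))^2" using sconv by (simp add: less_imp_le)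
  have "(\<Sum>k<n. \<mu>i k / 2 * (norm (y k - xo k))^2) \<le> 0" using s1 s2 s3 by linarith
  then have "(\<Sum>k<n. \<mu>i k / 2 * (norm (y k - xo k))^2) = 0" using sum_nonneg[of "{..<n}" "\<lambda>k. \<mu>i k / 2 * (norm (y k - xo k))^2", OF nn] by linarith
  then have "\<mu>i i / 2 * (norm (y i - xo i))^2 = 0" using sum_nonneg_eq_0_iff[of "{..<n}" "\<lambda>k. \<mu>i k / 2 * (norm (y k - xo k))^2", OF _ nn] i by auto
  then show ?thesis using sconv[OF i] by simp
qed


lemma lyap_alg:
  fixes \<alpha> \<beta> \<eta> \<mu> l e n sX sXp sWp sSW sSX sSG sLp cXG cXW vq pG pX :: real
  assumes a0: "\<alpha> > 0" and n0: "n > 0"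
    and nnX: "sX \<ge> 0" and nnW: "sWp \<ge> 0" and nnSW: "sSW \<ge> 0" and nnL: "sLp \<ge> 0"
    and hXG: "cXG \<ge> \<mu> * sX" and hXW: "3 * cXW \<le> 9/4 * sXp + sWp" and hXp: "sXp \<le> sX"
    and hvq: "vq \<ge> \<eta> * sLp" and b0: "\<beta> \<ge> 0"
    and hpG: "- \<alpha> * pG \<le> \<alpha>^2 * sSG + sSW / 4" and hpX: "- pX \<le> sSX + sSW / 4"
    and hSG: "sSG \<le> n * l^2 * sX" and hSX: "sSX \<le> n * sX"
    and e0: "e > 0" and D0: "\<alpha> * \<mu> - 5/4 - e * (\<alpha>^2 * l^2 + 1 + \<alpha>) > 0" and be: "\<beta> * \<eta> - \<alpha> > 0"
    and hpX2: "e * pX \<le> sSX / 4 + e^2 * sSW" and hpX3: "- (e * pX) \<le> sSX / 4 + e^2 * sSW"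
    and e2: "e^2 \<le> 1 / (4 * \<alpha>)"
  defines "V \<equiv> sX / 2 + sWp / \<alpha> + sSW / (2 * \<alpha> * n) + e / n * pX + \<alpha> * sLp"
    and "Vd \<equiv> - \<alpha> * cXG - sX + 3 * cXW - 2 * sWp + 2 * \<alpha>^2 * sLp - 2 * \<alpha> * \<beta> * vq
              + e / n * (- \<alpha> * pG - sSW - pX + \<alpha> * sSX)"
    and "\<kappa> \<equiv> min (min (4 * (\<alpha> * \<mu> - 5/4 - e * (\<alpha>^2 * l^2 + 1 + \<alpha>)) / 3) \<alpha>) (min (2 * \<alpha> * e / 3) (2 * (\<beta> * \<eta> - \<alpha>)))"
  shows "Vd \<le> - \<kappa> * V" and "V \<ge> sX / 4 + sWp / \<alpha> + sSW / (4 * \<alpha> * n) + \<alpha> * sLp"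
    and "\<kappa> > 0"
proof -
  define D where "D = \<alpha> * \<mu> - 5/4 - e * (\<alpha>^2 * l^2 + 1 + \<alpha>)"
  have D: "D > 0" using D0 unfolding D_def .
  have T1: "- \<alpha> * cXG - sX + 3 * cXW \<le> - \<alpha> * \<mu> * sX - sX + 9/4 * sX + sWp"
  proof -
    have "\<alpha> * (\<mu> * sX) \<le> \<alpha> * cXG" using hXG a0 by (intro mult_left_mono) auto
    then show ?thesis using hXW hXp by (simp add: algebra_simps)
  qed
  have T3: "2 * \<alpha>^2 * sLp - 2 * \<alpha> * \<beta> * vq \<le> - 2 * \<alpha> * (\<beta> * \<eta> - \<alpha>) * sLp"
  proof -
    have "(2 * \<alpha> * \<beta>) * (\<eta> * sLp) \<le> (2 * \<alpha> * \<beta>) * vq" using hvq a0 b0 by (intro mult_left_mono) auto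
    then show ?thesis by (simp add: algebra_simps power2_eq_square)
  qed
  have T4: "e / n * (- \<alpha> * pG - sSW - pX + \<alpha> * sSX) \<le> e * (\<alpha>^2 * l^2 + 1 + \<alpha>) * sX - e / (2 * n) * sSW"
  proof -
    have "- \<alpha> * pG - sSW - pX + \<alpha> * sSX \<le> \<alpha>^2 * sSG + (1 + \<alpha>) * sSX - sSW / 2"
      using hpG hpX by (simp add: algebra_simps)
    also have "\<dots> \<le> \<alpha>^2 * (n * l^2 * sX) + (1 + \<alpha>) * (n * sX) - sSW / 2"
    proof -
      have "\<alpha>^2 * sSG \<le> \<alpha>^2 * (n * l^2 * sX)" using hSG by (intro mult_left_mono) auto
      moreover have "(1 + \<alpha>) * sSX \<le> (1 + \<alpha>) * (n * sX)" using hSX a0 by (intro mult_left_mono) auto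
      ultimately show ?thesis by linarith
    qed
    finally have "e / n * (- \<alpha> * pG - sSW - pX + \<alpha> * sSX) \<le> e / n * (\<alpha>^2 * (n * l^2 * sX) + (1 + \<alpha>) * (n * sX) - sSW / 2)"
      using e0 n0 by (intro mult_left_mono) auto
    also have "\<dots> = e * (\<alpha>^2 * l^2 + 1 + \<alpha>) * sX - e / (2 * n) * sSW"
      using n0 by (simp add: field_simps)
    finally show ?thesis .
  qed
  have R: "Vd \<le> - D * sX - sWp - 2 * \<alpha> * (\<beta> * \<eta> - \<alpha>) * sLp - e / (2 * n) * sSW"
  proof -
    have "Vd = (- \<alpha> * cXG - sX + 3 * cXW) - 2 * sWp + (2 * \<alpha>^2 * sLp - 2 * \<alpha> * \<beta> * vq)
              + e / n * (- \<alpha> * pG - sSW - pX + \<alpha> * sSX)" unfolding Vd_def by simp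
    moreover have "D * sX = \<alpha> * \<mu> * sX - 5/4 * sX - e * (\<alpha>^2 * l^2 + 1 + \<alpha>) * sX"
      unfolding D_def by (simp add: algebra_simps)
    ultimately show ?thesis using T1 T3 T4 by linarith
  qed
  have Vup: "V \<le> 3/4 * sX + sWp / \<alpha> + 3 * sSW / (4 * \<alpha> * n) + \<alpha> * sLp"
  proof -
    have "e * pX \<le> n * sX / 4 + sSW / (4 * \<alpha>)"
    proof -
      have "e^2 * sSW \<le> 1 / (4 * \<alpha>) * sSW" using e2 nnSW by (intro mult_right_mono) auto
      then show ?thesis using hpX2 hSX by simp
    qed
    then have "e * pX / n \<le> (n * sX / 4 + sSW / (4 * \<alpha>)) / n" using n0 by (intro divide_right_mono) auto
    also have "\<dots> = sX / 4 + sSW / (4 * \<alpha> * n)" using n0 a0 by (simp add: field_simps)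
    finally have "e / n * pX \<le> sX / 4 + sSW / (4 * \<alpha> * n)" by simp
    moreover have "sSW / (2 * \<alpha> * n) + sSW / (4 * \<alpha> * n) = 3 * sSW / (4 * \<alpha> * n)"
      using n0 a0 by (simp add: field_simps)
    ultimately show ?thesis unfolding V_def by linarith
  qed
  show "V \<ge> sX / 4 + sWp / \<alpha> + sSW / (4 * \<alpha> * n) + \<alpha> * sLp"
  proof -
    have "- (e * pX) \<le> n * sX / 4 + sSW / (4 * \<alpha>)"
    proof -
      have "e^2 * sSW \<le> 1 / (4 * \<alpha>) * sSW" using e2 nnSW by (intro mult_right_mono) auto
      then show ?thesis using hpX3 hSX by simp
    qed
    then have "- (e * pX) / n \<le> (n * sX / 4 + sSW / (4 * \<alpha>)) / n" using n0 by (intro divide_right_mono) auto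
    also have "\<dots> = sX / 4 + sSW / (4 * \<alpha> * n)" using n0 a0 by (simp add: field_simps)
    finally have "- (e / n * pX) \<le> sX / 4 + sSW / (4 * \<alpha> * n)" by simp
    moreover have "sSW / (2 * \<alpha> * n) - sSW / (4 * \<alpha> * n) = sSW / (4 * \<alpha> * n)"
      using n0 a0 by (simp add: field_simps)
    ultimately show ?thesis unfolding V_def by linarith
  qed
  have k_def': "\<kappa> = min (min (4 * D / 3) \<alpha>) (min (2 * \<alpha> * e / 3) (2 * (\<beta> * \<eta> - \<alpha>)))"
    unfolding \<kappa>_def D_def ..
  show kpos: "\<kappa> > 0" unfolding k_def' using D a0 e0 be by auto
  have k1: "\<kappa> * (3/4) \<le> D" and k2: "\<kappa> \<le> \<alpha>" and k3: "\<kappa> \<le> 2 * \<alpha> * e / 3" and k4: "\<kappa> \<le> 2 * (\<beta> * \<eta> - \<alpha>)"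
  proof -
    have a: "\<kappa> \<le> 4 * D / 3" "\<kappa> \<le> \<alpha>" "\<kappa> \<le> 2 * \<alpha> * e / 3" "\<kappa> \<le> 2 * (\<beta> * \<eta> - \<alpha>)"
      unfolding k_def' by linarith+
    then show "\<kappa> * (3/4) \<le> D" "\<kappa> \<le> \<alpha>" "\<kappa> \<le> 2 * \<alpha> * e / 3" "\<kappa> \<le> 2 * (\<beta> * \<eta> - \<alpha>)" by linarith+
  qed
  have "\<kappa> * V \<le> \<kappa> * (3/4 * sX + sWp / \<alpha> + 3 * sSW / (4 * \<alpha> * n) + \<alpha> * sLp)"
    using Vup kpos by (intro mult_left_mono) auto
  also have "\<dots> = (\<kappa> * (3/4)) * sX + (\<kappa> / \<alpha>) * sWp + (\<kappa> * 3 / (4 * \<alpha>)) * (sSW / n) + (\<kappa> * \<alpha>) * sLp"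
    using a0 n0 by (simp add: field_simps)
  also have "\<dots> \<le> D * sX + 1 * sWp + (e / 2) * (sSW / n) + (2 * \<alpha> * (\<beta> * \<eta> - \<alpha>)) * sLp"
  proof -
    have "(\<kappa> * (3/4)) * sX \<le> D * sX" using k1 nnX by (intro mult_right_mono) auto
    moreover have "(\<kappa> / \<alpha>) * sWp \<le> 1 * sWp" using k2 a0 nnW by (intro mult_right_mono) auto
    moreover have "(\<kappa> * 3 / (4 * \<alpha>)) * (sSW / n) \<le> (e / 2) * (sSW / n)"
    proof -
      have "\<kappa> * 3 / (4 * \<alpha>) \<le> e / 2" using k3 a0 by (simp add: field_simps)
      then show ?thesis using nnSW n0 by (intro mult_right_mono) auto
    qed
    moreover have "(\<kappa> * \<alpha>) * sLp \<le> (2 * \<alpha> * (\<beta> * \<eta> - \<alpha>)) * sLp"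
      using k4 a0 nnL by (intro mult_right_mono) (auto simp: mult.commute)
    ultimately show ?thesis by linarith
  qed
  finally have "\<kappa> * V \<le> D * sX + sWp + e / (2 * n) * sSW + 2 * \<alpha> * (\<beta> * \<eta> - \<alpha>) * sLp"
    by (simp add: field_simps)
  then show "Vd \<le> - \<kappa> * V" using R by linarith
qed


definition ipr :: "nat \<Rightarrow> (nat \<Rightarrow> 'a::real_inner) \<Rightarrow> (nat \<Rightarrow> 'a) \<Rightarrow> real" where
  "ipr n u v = (\<Sum>i<n. inner (u i) (v i))"

definition Sm :: "nat \<Rightarrow> (nat \<Rightarrow> 'a::real_vector) \<Rightarrow> 'a" where
  "Sm n u = (\<Sum>i<n. u i)"

definition pp :: "nat \<Rightarrow> (nat \<Rightarrow> 'a::real_vector) \<Rightarrow> nat \<Rightarrow> 'a" where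
  "pp n u = (\<lambda>i. u i - (1 / real n) *\<^sub>R Sm n u)"

definition Lv :: "nat \<Rightarrow> (nat \<Rightarrow> nat \<Rightarrow> real) \<Rightarrow> (nat \<Rightarrow> 'a::real_vector) \<Rightarrow> nat \<Rightarrow> 'a" where
  "Lv n a u = (\<lambda>i. \<Sum>j<n. lap n a i j *\<^sub>R u j)"

lemma ipr_commute: "ipr n u v = ipr n v u"
  unfolding ipr_def by (simp add: inner_commute)

lemma Sm_pp: assumes "n > 0" shows "Sm n (pp n u) = 0"
  using assms unfolding pp_def Sm_def by (simp add: sum_subtractf sum_constant_scaleR)

lemma ipr_pp_left: assumes n: "n > 0"
  shows "ipr n (pp n u) v = ipr n u v - inner (Sm n u) (Sm n v) / n"
proof -
  have "(\<Sum>i<n. inner ((1 / real n) *\<^sub>R Sm n u) (v i)) = inner (Sm n u) (Sm n v) / n"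
    by (simp add: inner_sum_right[symmetric] Sm_def sum_divide_distrib[symmetric])
  then show ?thesis unfolding ipr_def pp_def by (simp add: inner_diff_left sum_subtractf)
qed

lemma ipr_pp: assumes n: "n > 0"
  shows "ipr n (pp n u) (pp n v) = ipr n u v - inner (Sm n u) (Sm n v) / n"
proof -
  have "ipr n (pp n u) (pp n v) = ipr n (pp n v) (pp n u)" by (rule ipr_commute)
  also have "\<dots> = ipr n v (pp n u) - inner (Sm n v) (Sm n (pp n u)) / n" by (rule ipr_pp_left[OF n])
  also have "\<dots> = ipr n v (pp n u)" by (simp only: Sm_pp[OF n, of u] inner_zero_right)
  also have "\<dots> = ipr n (pp n u) v" by (rule ipr_commute)
  also have "\<dots> = ipr n u v - inner (Sm n u) (Sm n v) / n" by (rule ipr_pp_left[OF n])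
  finally show ?thesis .
qed

lemma ipr_self_nonneg: "ipr n u u \<ge> 0"
  unfolding ipr_def by (auto intro: sum_nonneg)

lemma Sm_sq_le: assumes n: "n > 0" shows "inner (Sm n u) (Sm n u) \<le> n * ipr n u u"
proof -
  have "0 \<le> ipr n (pp n u) (pp n u)" by (rule ipr_self_nonneg)
  then have "inner (Sm n u) (Sm n u) / n \<le> ipr n u u" using ipr_pp[OF n, of u u] by simp
  then show ?thesis using n by (simp add: divide_le_eq mult.commute)
qed

lemma young_neg: fixes u v :: "'a::real_inner"
  shows "- (c * inner u v) \<le> c^2 * inner u u + inner v v / 4"
proof -
  have "0 \<le> inner (c *\<^sub>R u + (1/2) *\<^sub>R v) (c *\<^sub>R u + (1/2) *\<^sub>R v)" by simp
  then show ?thesis by (simp add: inner_add_left inner_add_right inner_commute power2_eq_square algebra_simps)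
qed

lemma young_pos: fixes u v :: "'a::real_inner"
  shows "c * inner u v \<le> c^2 * inner u u + inner v v / 4"
  using young_neg[of "-c" u v] by simp

lemma Sm_Lv: assumes wb: "weight_balanced n a" shows "Sm n (Lv n a u) = 0"
proof -
  have "Sm n (Lv n a u) = (\<Sum>j<n. (\<Sum>i<n. lap n a i j) *\<^sub>R u j)"
    unfolding Sm_def Lv_def by (subst sum.swap) (simp add: scaleR_sum_left)
  also have "\<dots> = 0" using lap_col_sum[OF wb] by simp
  finally show ?thesis .
qed

lemma Lv_pp: assumes "i < n" shows "Lv n a (pp n u) i = Lv n a u i"
proof -
  have "Lv n a (pp n u) i = Lv n a u i - (\<Sum>j<n. lap n a i j) *\<^sub>R ((1 / real n) *\<^sub>R Sm n u)"
    unfolding Lv_def pp_def by (simp add: scaleR_diff_right sum_subtractf scaleR_sum_left[symmetric] sum_divide_distrib[symmetric])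
  moreover have "(\<Sum>j<n. lap n a i j) = 0" using lap_row_sum[OF assms] .
  ultimately show ?thesis by simp
qed


lemma vec_spectral:
  fixes u :: "nat \<Rightarrow> 'a::euclidean_space"
  assumes n2: "n \<ge> 2" and wb: "weight_balanced n a"
    and nn: "\<And>i j. i < n \<Longrightarrow> j < n \<Longrightarrow> a i j \<ge> 0"
    and sc: "strongly_connected n a" and s0: "Sm n u = 0"
  shows "eta2 (lap_hat n a) * ipr n u u \<le> ipr n u (Lv n a u)"
proof -
  have e1: "ipr n u (Lv n a u) = (\<Sum>b\<in>Basis. qf n a (\<lambda>i. inner (u i) b))"
  proof -
    have "ipr n u (Lv n a u) = (\<Sum>i<n. \<Sum>j<n. lap n a i j * inner (u i) (u j))"
      unfolding ipr_def Lv_def by (simp add: inner_sum_right)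
    also have "\<dots> = (\<Sum>i<n. \<Sum>j<n. \<Sum>b\<in>Basis. lap n a i j * inner (u i) b * inner (u j) b)"
      by (simp add: euclidean_inner[of "u _" "u _"] sum_distrib_left mult.assoc)
    also have "\<dots> = (\<Sum>b\<in>Basis. qf n a (\<lambda>i. inner (u i) b))"
      unfolding qf_def by (simp add: sum.swap[of _ Basis])
    finally show ?thesis .
  qed
  have e2: "ipr n u u = (\<Sum>b\<in>Basis. \<Sum>i<n. (inner (u i) b)^2)"
    unfolding ipr_def by (subst sum.swap) (simp add: euclidean_inner[of "u _" "u _"] power2_eq_square)
  have bnd: "eta2 (lap_hat n a) * (\<Sum>i<n. (inner (u i) b)^2) \<le> qf n a (\<lambda>i. inner (u i) b)" for b
  proof -
    have "(\<Sum>i<n. inner (u i) b) = inner (Sm n u) b" unfolding Sm_def by (simp add: inner_sum_left)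
    then have "(\<Sum>i<n. inner (u i) b) = 0" using s0 by simp
    then show ?thesis using eta2_props(2)[OF n2 wb nn sc, of "\<lambda>i. inner (u i) b"] by simp
  qed
  have "eta2 (lap_hat n a) * ipr n u u = (\<Sum>b\<in>Basis. eta2 (lap_hat n a) * (\<Sum>i<n. (inner (u i) b)^2))"
    unfolding e2 by (simp add: sum_distrib_left)
  also have "\<dots> \<le> (\<Sum>b\<in>Basis. qf n a (\<lambda>i. inner (u i) b))" by (intro sum_mono bnd)
  finally show ?thesis unfolding e1 .
qed


lemma ipr_add_right: "ipr n u (\<lambda>i. v i + w i) = ipr n u v + ipr n u w"
  unfolding ipr_def by (simp add: inner_add_right sum.distrib)
lemma ipr_diff_right: "ipr n u (\<lambda>i. v i - w i) = ipr n u v - ipr n u w"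
  unfolding ipr_def by (simp add: inner_diff_right sum_subtractf)
lemma ipr_scaleR_right: "ipr n u (\<lambda>i. c *\<^sub>R v i) = c * ipr n u v"
  unfolding ipr_def by (simp add: sum_distrib_left)
lemma ipr_add_left: "ipr n (\<lambda>i. v i + w i) u = ipr n v u + ipr n w u"
  unfolding ipr_def by (simp add: inner_add_left sum.distrib)
lemma ipr_diff_left: "ipr n (\<lambda>i. v i - w i) u = ipr n v u - ipr n w u"
  unfolding ipr_def by (simp add: inner_diff_left sum_subtractf)
lemma ipr_scaleR_left: "ipr n (\<lambda>i. c *\<^sub>R v i) u = c * ipr n v u"
  unfolding ipr_def by (simp add: sum_distrib_left)
lemma ipr_minus_right: "ipr n u (\<lambda>i. - v i) = - ipr n u v"
  unfolding ipr_def by (simp add: sum_negf)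
lemma ipr_minus_left: "ipr n (\<lambda>i. - v i) u = - ipr n v u"
  unfolding ipr_def by (simp add: sum_negf)
lemmas ipr_rules = ipr_minus_right ipr_minus_left ipr_add_right ipr_diff_right ipr_scaleR_right ipr_add_left ipr_diff_left ipr_scaleR_left

lemma Sm_add: "Sm n (\<lambda>i. v i + w i) = Sm n v + Sm n w"
  unfolding Sm_def by (simp add: sum.distrib)
lemma Sm_diff: "Sm n (\<lambda>i. v i - w i) = Sm n v - Sm n w"
  unfolding Sm_def by (simp add: sum_subtractf)
lemma Sm_scaleR: "Sm n (\<lambda>i. c *\<^sub>R v i) = c *\<^sub>R Sm n v"
  unfolding Sm_def by (simp add: scaleR_sum_right)
lemma Sm_minus: "Sm n (\<lambda>i. - v i) = - Sm n v"
  unfolding Sm_def by (simp add: sum_negf)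
lemmas Sm_rules = Sm_minus Sm_add Sm_diff Sm_scaleR

lemma young3: fixes u v :: "'a::real_inner"
  shows "3 * inner u v \<le> 9/4 * inner u u + inner v v"
proof -
  have "0 \<le> inner ((3/2) *\<^sub>R u - v) ((3/2) *\<^sub>R u - v)" by simp
  then show ?thesis by (simp add: inner_diff_left inner_diff_right inner_commute algebra_simps)
qed

definition Wf :: "real \<Rightarrow> (nat \<Rightarrow> 'a::real_vector) \<Rightarrow> (nat \<Rightarrow> 'a) \<Rightarrow> nat \<Rightarrow> 'a" where
  "Wf \<alpha> Z L = (\<lambda>i. Z i + \<alpha> *\<^sub>R L i)"

definition Vf :: "nat \<Rightarrow> real \<Rightarrow> real \<Rightarrow> (nat \<Rightarrow> 'a::real_inner) \<Rightarrow> (nat \<Rightarrow> 'a) \<Rightarrow> (nat \<Rightarrow> 'a) \<Rightarrow> real" where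
  "Vf n \<alpha> e X L Z = ipr n X X / 2 + ipr n (Wf \<alpha> Z L) (Wf \<alpha> Z L) / \<alpha> + \<alpha> * ipr n L L
     - 3 / (2 * \<alpha> * n) * inner (Sm n (Wf \<alpha> Z L)) (Sm n (Wf \<alpha> Z L))
     + e / n * inner (Sm n X) (Sm n (Wf \<alpha> Z L))"

definition DV :: "nat \<Rightarrow> real \<Rightarrow> real \<Rightarrow> (nat \<Rightarrow> 'a::real_inner) \<Rightarrow> (nat \<Rightarrow> 'a) \<Rightarrow> (nat \<Rightarrow> 'a)
    \<Rightarrow> (nat \<Rightarrow> 'a) \<Rightarrow> (nat \<Rightarrow> 'a) \<Rightarrow> (nat \<Rightarrow> 'a) \<Rightarrow> real" where
  "DV n \<alpha> e X L Z X' L' Z' = ipr n X X' + 2 / \<alpha> * ipr n (Wf \<alpha> Z L) (Wf \<alpha> Z' L') + 2 * \<alpha> * ipr n L L'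
     - 3 / (\<alpha> * n) * inner (Sm n (Wf \<alpha> Z L)) (Sm n (Wf \<alpha> Z' L'))
     + e / n * (inner (Sm n X') (Sm n (Wf \<alpha> Z L)) + inner (Sm n X) (Sm n (Wf \<alpha> Z' L')))"


lemma state_lyap:
  fixes X L Z G :: "nat \<Rightarrow> 'a::euclidean_space"
  assumes n2: "n \<ge> 2" and a0: "\<alpha> > 0" and b0: "\<beta> \<ge> 0"
    and wb: "weight_balanced n a" and nn: "\<And>i j. i < n \<Longrightarrow> j < n \<Longrightarrow> a i j \<ge> 0"
    and sc: "strongly_connected n a" and eta: "\<eta> \<le> eta2 (lap_hat n a)"
    and sZ: "Sm n Z = 0"
    and hG1: "\<And>i. i < n \<Longrightarrow> inner (X i) (G i) \<ge> \<mu> * (norm (X i))^2"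
    and hG2: "\<And>i. i < n \<Longrightarrow> norm (G i) \<le> l * norm (X i)" and l0: "l \<ge> 0"
    and e0: "e > 0" and D0: "\<alpha> * \<mu> - 5/4 - e * (\<alpha>^2 * l^2 + 1 + \<alpha>) > 0" and be: "\<beta> * \<eta> - \<alpha> > 0"
    and e2: "e^2 \<le> 1 / (4 * \<alpha>)"
  defines "X' \<equiv> (\<lambda>i. - \<alpha> *\<^sub>R (G i + L i) - (X i - Z i))"
    and "L' \<equiv> (\<lambda>i. X i - Z i - \<beta> *\<^sub>R Lv n a L i)"
    and "Z' \<equiv> (\<lambda>i. (\<alpha> * \<beta>) *\<^sub>R Lv n a L i)"
    and "\<kappa> \<equiv> min (min (4 * (\<alpha> * \<mu> - 5/4 - e * (\<alpha>^2 * l^2 + 1 + \<alpha>)) / 3) \<alpha>) (min (2 * \<alpha> * e / 3) (2 * (\<beta> * \<eta> - \<alpha>)))"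
  shows "DV n \<alpha> e X L Z X' L' Z' \<le> - \<kappa> * Vf n \<alpha> e X L Z"
    and "Vf n \<alpha> e X L Z \<ge> ipr n X X / 4 + ipr n (pp n (Wf \<alpha> Z L)) (pp n (Wf \<alpha> Z L)) / \<alpha>
           + inner (Sm n (Wf \<alpha> Z L)) (Sm n (Wf \<alpha> Z L)) / (4 * \<alpha> * n) + \<alpha> * ipr n (pp n L) (pp n L)"
    and "\<kappa> > 0"
proof -
  have n0: "n > 0" using n2 by simp
  have nr: "real n > 0" using n0 by simp
  define W where "W = Wf \<alpha> Z L"
  define SX where "SX = Sm n X"
  define SL where "SL = Sm n L"
  define SG where "SG = Sm n G"
  define SW where "SW = Sm n W"
  have SW: "SW = \<alpha> *\<^sub>R SL" unfolding SW_def W_def Wf_def SL_def using sZ by (simp add: Sm_rules)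
  have W': "Wf \<alpha> Z' L' = (\<lambda>i. \<alpha> *\<^sub>R (X i - Z i))"
    unfolding Wf_def Z'_def L'_def by (auto simp: fun_eq_iff algebra_simps)
  have SW': "Sm n (Wf \<alpha> Z' L') = \<alpha> *\<^sub>R SX" unfolding W' SX_def using sZ by (simp add: Sm_rules)
  have SX': "Sm n X' = - \<alpha> *\<^sub>R (SG + SL) - SX"
    unfolding X'_def SG_def SL_def SX_def using sZ by (simp add: Sm_rules)
  define iXG where "iXG = ipr n X G"
  define iXL where "iXL = ipr n X L"
  define iXZ where "iXZ = ipr n X Z"
  define iZL where "iZL = ipr n Z L"
  define sX where "sX = ipr n X X"
  define sZ2 where "sZ2 = ipr n Z Z"
  define sL where "sL = ipr n L L"
  define iLL where "iLL = ipr n L (Lv n a L)"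
  have c1: "ipr n L X = iXL" "ipr n Z X = iXZ" "ipr n L Z = iZL"
    unfolding iXL_def iXZ_def iZL_def by (simp_all add: ipr_commute)
  have A1: "ipr n X X' = - \<alpha> * iXG - \<alpha> * iXL - sX + iXZ"
    unfolding X'_def iXG_def iXL_def sX_def iXZ_def by (simp add: ipr_rules algebra_simps)
  have A2: "ipr n W (Wf \<alpha> Z' L') = \<alpha> * iXZ - \<alpha> * sZ2 + \<alpha>^2 * iXL - \<alpha>^2 * iZL"
    unfolding W' unfolding W_def Wf_def sZ2_def using c1 by (simp add: ipr_rules algebra_simps power2_eq_square)
  have A3: "ipr n L L' = iXL - iZL - \<beta> * iLL"
    unfolding L'_def iLL_def using c1 by (simp add: ipr_rules)
  have A4: "ipr n W W = sZ2 + 2 * \<alpha> * iZL + \<alpha>^2 * sL"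
    unfolding W_def Wf_def sZ2_def sL_def using c1 by (simp add: ipr_rules algebra_simps power2_eq_square iZL_def)
  have A5: "ipr n X W = iXZ + \<alpha> * iXL"
    unfolding W_def Wf_def iXZ_def iXL_def by (simp add: ipr_rules)
  have P1: "ipr n (pp n X) (pp n W) = iXZ + \<alpha> * iXL - \<alpha> * inner SX SL / n"
    using ipr_pp[OF n0, of X W] A5 unfolding SX_def[symmetric] SW_def[symmetric] SW by simp
  have P2: "ipr n (pp n W) (pp n W) = sZ2 + 2 * \<alpha> * iZL + \<alpha>^2 * sL - \<alpha>^2 * inner SL SL / n"
    using ipr_pp[OF n0, of W W] A4 unfolding SW_def[symmetric] SW by (simp add: power2_eq_square)
  have P3: "ipr n (pp n L) (pp n L) = sL - inner SL SL / n"
    using ipr_pp[OF n0, of L L] unfolding SL_def[symmetric] sL_def by simp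
  have P5: "ipr n (pp n X) (pp n X) = sX - inner SX SX / n"
    using ipr_pp[OF n0, of X X] unfolding SX_def[symmetric] sX_def by simp
  have P4: "ipr n (pp n L) (Lv n a (pp n L)) = iLL"
  proof -
    have "ipr n (pp n L) (Lv n a (pp n L)) = ipr n (pp n L) (Lv n a L)"
      unfolding ipr_def by (intro sum.cong) (auto simp: Lv_pp)
    also have "\<dots> = iLL" unfolding ipr_pp_left[OF n0] iLL_def Sm_Lv[OF wb] by simp
    finally show ?thesis .
  qed
  have hXG: "iXG \<ge> \<mu> * sX"
  proof -
    have "\<mu> * sX = (\<Sum>i<n. \<mu> * (norm (X i))^2)" unfolding sX_def ipr_def by (simp add: sum_distrib_left power2_norm_eq_inner)
    also have "\<dots> \<le> iXG" unfolding iXG_def ipr_def by (intro sum_mono hG1) auto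
    finally show ?thesis .
  qed
  have hXW: "3 * ipr n (pp n X) (pp n W) \<le> 9/4 * ipr n (pp n X) (pp n X) + ipr n (pp n W) (pp n W)"
  proof -
    have "3 * ipr n (pp n X) (pp n W) = (\<Sum>i<n. 3 * inner (pp n X i) (pp n W i))" unfolding ipr_def by (simp add: sum_distrib_left)
    also have "\<dots> \<le> (\<Sum>i<n. 9/4 * inner (pp n X i) (pp n X i) + inner (pp n W i) (pp n W i))" by (intro sum_mono young3)
    also have "\<dots> = 9/4 * ipr n (pp n X) (pp n X) + ipr n (pp n W) (pp n W)" unfolding ipr_def by (simp add: sum.distrib sum_distrib_left)
    finally show ?thesis .
  qed
  have hvq: "iLL \<ge> \<eta> * ipr n (pp n L) (pp n L)"
  proof -
    have "eta2 (lap_hat n a) * ipr n (pp n L) (pp n L) \<le> iLL"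
      using vec_spectral[OF n2 wb nn sc Sm_pp[OF n0, of L]] P4 by simp
    moreover have "\<eta> * ipr n (pp n L) (pp n L) \<le> eta2 (lap_hat n a) * ipr n (pp n L) (pp n L)"
      using eta ipr_self_nonneg by (intro mult_right_mono) auto
    ultimately show ?thesis by linarith
  qed
  have hSG: "inner SG SG \<le> n * l^2 * sX"
  proof -
    have "ipr n G G \<le> l^2 * sX"
    proof -
      have "ipr n G G = (\<Sum>i<n. (norm (G i))^2)" unfolding ipr_def by (simp add: power2_norm_eq_inner)
      also have "\<dots> \<le> (\<Sum>i<n. (l * norm (X i))^2)" using hG2 by (intro sum_mono power_mono) auto
      also have "\<dots> = l^2 * sX" unfolding sX_def ipr_def by (simp add: sum_distrib_left power_mult_distrib power2_norm_eq_inner)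
      finally show ?thesis .
    qed
    then have "n * ipr n G G \<le> n * (l^2 * sX)" by (intro mult_left_mono) auto
    then show ?thesis using Sm_sq_le[OF n0, of G] unfolding SG_def by (simp add: mult.assoc)
  qed
  have hSX: "inner SX SX \<le> n * sX" using Sm_sq_le[OF n0, of X] unfolding SX_def sX_def .
  have hpG: "- \<alpha> * inner SG SW \<le> \<alpha>^2 * inner SG SG + inner SW SW / 4" using young_neg[of \<alpha> SG SW] by simp
  have hpX: "- inner SX SW \<le> inner SX SX + inner SW SW / 4" using young_neg[of 1 SX SW] by simp
  have hpX2: "e * inner SX SW \<le> inner SX SX / 4 + e^2 * inner SW SW"
    using young_pos[of e SW SX] by (simp add: inner_commute add.commute)
  have hpX3: "- (e * inner SX SW) \<le> inner SX SX / 4 + e^2 * inner SW SW"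
    using young_neg[of e SW SX] by (simp add: inner_commute add.commute)
  note LA = lyap_alg[where \<alpha>=\<alpha> and n="real n" and sX=sX and sWp="ipr n (pp n W) (pp n W)" and sSW="inner SW SW"
      and sLp="ipr n (pp n L) (pp n L)" and \<mu>=\<mu> and cXG=iXG and cXW="ipr n (pp n X) (pp n W)"
      and sXp="ipr n (pp n X) (pp n X)" and vq=iLL and \<eta>=\<eta> and \<beta>=\<beta> and pG="inner SG SW" and sSG="inner SG SG"
      and pX="inner SX SW" and sSX="inner SX SX" and l=l and e=e]
  have prem: "sX \<ge> 0" "ipr n (pp n W) (pp n W) \<ge> 0" "inner SW SW \<ge> 0" "ipr n (pp n L) (pp n L) \<ge> 0"
    "ipr n (pp n X) (pp n X) \<le> sX"
    unfolding sX_def using ipr_self_nonneg P5 by (auto simp: sX_def)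
  define VdA where "VdA = - \<alpha> * iXG - sX + 3 * ipr n (pp n X) (pp n W) - 2 * ipr n (pp n W) (pp n W)
     + 2 * \<alpha>^2 * ipr n (pp n L) (pp n L) - 2 * \<alpha> * \<beta> * iLL
     + e / real n * (- \<alpha> * inner SG SW - inner SW SW - inner SX SW + \<alpha> * inner SX SX)"
  define VA where "VA = sX / 2 + ipr n (pp n W) (pp n W) / \<alpha> + inner SW SW / (2 * \<alpha> * real n)
     + e / real n * inner SX SW + \<alpha> * ipr n (pp n L) (pp n L)"
  note LAs = LA[OF a0 nr prem(1-4) hXG hXW prem(5) hvq b0 hpG hpX hSG hSX e0 D0 be hpX2 hpX3 e2]
  have LA1: "VdA \<le> - \<kappa> * VA" unfolding VdA_def VA_def \<kappa>_def by (rule LAs(1))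
  have LA2: "VA \<ge> sX / 4 + ipr n (pp n W) (pp n W) / \<alpha> + inner SW SW / (4 * \<alpha> * real n) + \<alpha> * ipr n (pp n L) (pp n L)"
    unfolding VA_def by (rule LAs(2))
  have LA3: "\<kappa> > 0" unfolding \<kappa>_def by (rule LAs(3))
  have I1: "inner SW (\<alpha> *\<^sub>R SX) = \<alpha>^2 * inner SX SL" unfolding SW by (simp add: inner_commute power2_eq_square)
  have I2: "inner (- \<alpha> *\<^sub>R (SG + SL) - SX) SW = - (\<alpha>^2 * inner SG SL) - \<alpha>^2 * inner SL SL - \<alpha> * inner SX SL"
    unfolding SW by (simp add: inner_add_left inner_diff_left power2_eq_square algebra_simps)
  have I3: "inner SX (\<alpha> *\<^sub>R SX) = \<alpha> * inner SX SX" by simp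
  have I4: "inner SG SW = \<alpha> * inner SG SL" "inner SW SW = \<alpha>^2 * inner SL SL" "inner SX SW = \<alpha> * inner SX SL"
    unfolding SW by (simp_all add: power2_eq_square)
  have E1: "DV n \<alpha> e X L Z X' L' Z' = VdA"
  proof -
    have "DV n \<alpha> e X L Z X' L' Z' = ipr n X X' + 2 / \<alpha> * ipr n W (Wf \<alpha> Z' L') + 2 * \<alpha> * ipr n L L'
       - 3 / (\<alpha> * n) * inner SW (\<alpha> *\<^sub>R SX) + e / n * (inner (- \<alpha> *\<^sub>R (SG + SL) - SX) SW + inner SX (\<alpha> *\<^sub>R SX))"
      unfolding DV_def W_def[symmetric] SW_def[symmetric] SX_def[symmetric] SW' SX' ..
    also have "\<dots> = (- \<alpha> * iXG - \<alpha> * iXL - sX + iXZ) + 2 / \<alpha> * (\<alpha> * iXZ - \<alpha> * sZ2 + \<alpha>^2 * iXL - \<alpha>^2 * iZL)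
       + 2 * \<alpha> * (iXL - iZL - \<beta> * iLL) - 3 / (\<alpha> * n) * (\<alpha>^2 * inner SX SL)
       + e / n * ((- (\<alpha>^2 * inner SG SL) - \<alpha>^2 * inner SL SL - \<alpha> * inner SX SL) + \<alpha> * inner SX SX)"
      unfolding A1 A2 A3 I1 I2 I3 ..
    also have "\<dots> = VdA"
      unfolding VdA_def P1 P2 P3 I4 using a0 nr by (simp add: field_simps power2_eq_square)
    finally show ?thesis .
  qed
  have E2: "Vf n \<alpha> e X L Z = VA"
  proof -
    have "Vf n \<alpha> e X L Z = ipr n X X / 2 + ipr n W W / \<alpha> + \<alpha> * ipr n L L
       - 3 / (2 * \<alpha> * n) * inner SW SW + e / n * inner SX SW"
      unfolding Vf_def W_def[symmetric] SW_def[symmetric] SX_def[symmetric] ..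
    also have "\<dots> = sX / 2 + (sZ2 + 2 * \<alpha> * iZL + \<alpha>^2 * sL) / \<alpha> + \<alpha> * sL
       - 3 / (2 * \<alpha> * n) * (\<alpha>^2 * inner SL SL) + e / n * (\<alpha> * inner SX SL)"
      unfolding A4 I4 sX_def sL_def ..
    also have "\<dots> = VA" unfolding VA_def P2 P3 I4 using a0 nr by (simp add: field_simps power2_eq_square)
    finally show ?thesis .
  qed
  show "DV n \<alpha> e X L Z X' L' Z' \<le> - \<kappa> * Vf n \<alpha> e X L Z" using LA1 E1 E2 by simp
  show "\<kappa> > 0" by (rule LA3)
  show "Vf n \<alpha> e X L Z \<ge> ipr n X X / 4 + ipr n (pp n (Wf \<alpha> Z L)) (pp n (Wf \<alpha> Z L)) / \<alpha>
           + inner (Sm n (Wf \<alpha> Z L)) (Sm n (Wf \<alpha> Z L)) / (4 * \<alpha> * n) + \<alpha> * ipr n (pp n L) (pp n L)"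
    using LA2 E2 unfolding W_def[symmetric] SW_def[symmetric] sX_def[symmetric] by simp
qed


lemma hvd_inner:
  fixes u v :: "real \<Rightarrow> 'a::real_inner"
  assumes "(u has_vector_derivative u') (at t)" "(v has_vector_derivative v') (at t)"
  shows "((\<lambda>s. inner (u s) (v s)) has_vector_derivative (inner (u t) v' + inner u' (v t))) (at t)"
  using bounded_bilinear.has_vector_derivative[OF bounded_bilinear_inner assms] .

lemma hvd_cmul:
  fixes f :: "real \<Rightarrow> real"
  assumes "(f has_vector_derivative f') F"
  shows "((\<lambda>x. c * f x) has_vector_derivative (c * f')) F"
  using bounded_linear.has_vector_derivative[OF bounded_linear_mult_right assms] .

lemma hvd_ipr:
  fixes U V :: "real \<Rightarrow> nat \<Rightarrow> 'a::real_inner"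
  assumes "\<And>i. i < n \<Longrightarrow> ((\<lambda>s. U s i) has_vector_derivative U' i) (at t)"
    and "\<And>i. i < n \<Longrightarrow> ((\<lambda>s. V s i) has_vector_derivative V' i) (at t)"
  shows "((\<lambda>s. ipr n (U s) (V s)) has_vector_derivative (ipr n (U t) V' + ipr n U' (V t))) (at t)"
proof -
  have "((\<lambda>s. \<Sum>i<n. inner (U s i) (V s i)) has_vector_derivative (\<Sum>i<n. inner (U t i) (V' i) + inner (U' i) (V t i))) (at t)"
    by (intro has_vector_derivative_sum hvd_inner assms) auto
  then show ?thesis unfolding ipr_def by (simp add: sum.distrib)
qed

lemma hvd_Sm:
  fixes U :: "real \<Rightarrow> nat \<Rightarrow> 'a::real_normed_vector"
  assumes "\<And>i. i < n \<Longrightarrow> ((\<lambda>s. U s i) has_vector_derivative U' i) (at t)"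
  shows "((\<lambda>s. Sm n (U s)) has_vector_derivative Sm n U') (at t)"
  unfolding Sm_def by (intro has_vector_derivative_sum assms) auto

lemma hvd_Wf:
  fixes Z L :: "real \<Rightarrow> nat \<Rightarrow> 'a::real_normed_vector"
  assumes "((\<lambda>s. Z s i) has_vector_derivative Z' i) (at t)" "((\<lambda>s. L s i) has_vector_derivative L' i) (at t)"
  shows "((\<lambda>s. Wf \<alpha> (Z s) (L s) i) has_vector_derivative Wf \<alpha> Z' L' i) (at t)"
  unfolding Wf_def using assms
  by (auto intro!: has_vector_derivative_add bounded_linear.has_vector_derivative[OF bounded_linear_scaleR_right])

lemma Vf_deriv:
  fixes X L Z :: "real \<Rightarrow> nat \<Rightarrow> 'a::real_inner"
  assumes dX: "\<And>i. i < n \<Longrightarrow> ((\<lambda>s. X s i) has_vector_derivative X' i) (at t)"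
    and dL: "\<And>i. i < n \<Longrightarrow> ((\<lambda>s. L s i) has_vector_derivative L' i) (at t)"
    and dZ: "\<And>i. i < n \<Longrightarrow> ((\<lambda>s. Z s i) has_vector_derivative Z' i) (at t)"
    and a0: "\<alpha> \<noteq> 0"
  shows "((\<lambda>s. Vf n \<alpha> e (X s) (L s) (Z s)) has_real_derivative DV n \<alpha> e (X t) (L t) (Z t) X' L' Z') (at t)"
proof -
  define W where "W s = Wf \<alpha> (Z s) (L s)" for s
  have dW: "\<And>i. i < n \<Longrightarrow> ((\<lambda>s. W s i) has_vector_derivative Wf \<alpha> Z' L' i) (at t)"
    unfolding W_def by (intro hvd_Wf dZ dL)
  have d1: "((\<lambda>s. ipr n (X s) (X s)) has_vector_derivative (ipr n (X t) X' + ipr n X' (X t))) (at t)"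
    by (intro hvd_ipr dX)
  have d2: "((\<lambda>s. ipr n (W s) (W s)) has_vector_derivative (ipr n (W t) (Wf \<alpha> Z' L') + ipr n (Wf \<alpha> Z' L') (W t))) (at t)"
    by (intro hvd_ipr dW)
  have d3: "((\<lambda>s. ipr n (L s) (L s)) has_vector_derivative (ipr n (L t) L' + ipr n L' (L t))) (at t)"
    by (intro hvd_ipr dL)
  have sW: "((\<lambda>s. Sm n (W s)) has_vector_derivative Sm n (Wf \<alpha> Z' L')) (at t)" by (intro hvd_Sm dW)
  have sX: "((\<lambda>s. Sm n (X s)) has_vector_derivative Sm n X') (at t)" by (intro hvd_Sm dX)
  have d4: "((\<lambda>s. inner (Sm n (W s)) (Sm n (W s))) has_vector_derivative
      (inner (Sm n (W t)) (Sm n (Wf \<alpha> Z' L')) + inner (Sm n (Wf \<alpha> Z' L')) (Sm n (W t)))) (at t)"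
    by (rule hvd_inner[OF sW sW])
  have d5: "((\<lambda>s. inner (Sm n (X s)) (Sm n (W s))) has_vector_derivative
      (inner (Sm n (X t)) (Sm n (Wf \<alpha> Z' L')) + inner (Sm n X') (Sm n (W t)))) (at t)"
    by (rule hvd_inner[OF sX sW])
  have all: "((\<lambda>s. (1/2) * ipr n (X s) (X s) + (1/\<alpha>) * ipr n (W s) (W s) + \<alpha> * ipr n (L s) (L s)
       - (3 / (2 * \<alpha> * n)) * inner (Sm n (W s)) (Sm n (W s)) + (e / n) * inner (Sm n (X s)) (Sm n (W s)))
     has_vector_derivative
      ((1/2) * (ipr n (X t) X' + ipr n X' (X t)) + (1/\<alpha>) * (ipr n (W t) (Wf \<alpha> Z' L') + ipr n (Wf \<alpha> Z' L') (W t))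
       + \<alpha> * (ipr n (L t) L' + ipr n L' (L t))
       - (3 / (2 * \<alpha> * n)) * (inner (Sm n (W t)) (Sm n (Wf \<alpha> Z' L')) + inner (Sm n (Wf \<alpha> Z' L')) (Sm n (W t)))
       + (e / n) * (inner (Sm n (X t)) (Sm n (Wf \<alpha> Z' L')) + inner (Sm n X') (Sm n (W t))))) (at t)"
    by (intro has_vector_derivative_add has_vector_derivative_diff hvd_cmul d1 d2 d3 d4 d5)
  have eqf: "(\<lambda>s. Vf n \<alpha> e (X s) (L s) (Z s)) = (\<lambda>s. (1/2) * ipr n (X s) (X s) + (1/\<alpha>) * ipr n (W s) (W s) + \<alpha> * ipr n (L s) (L s)
       - (3 / (2 * \<alpha> * n)) * inner (Sm n (W s)) (Sm n (W s)) + (e / n) * inner (Sm n (X s)) (Sm n (W s)))"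
    unfolding Vf_def W_def by (simp add: fun_eq_iff)
  have eqd: "DV n \<alpha> e (X t) (L t) (Z t) X' L' Z' = (1/2) * (ipr n (X t) X' + ipr n X' (X t)) + (1/\<alpha>) * (ipr n (W t) (Wf \<alpha> Z' L') + ipr n (Wf \<alpha> Z' L') (W t))
       + \<alpha> * (ipr n (L t) L' + ipr n L' (L t))
       - (3 / (2 * \<alpha> * n)) * (inner (Sm n (W t)) (Sm n (Wf \<alpha> Z' L')) + inner (Sm n (Wf \<alpha> Z' L')) (Sm n (W t)))
       + (e / n) * (inner (Sm n (X t)) (Sm n (Wf \<alpha> Z' L')) + inner (Sm n X') (Sm n (W t)))"
    unfolding DV_def W_def using a0 by (simp add: ipr_commute[of n X'] ipr_commute[of n L'] ipr_commute[of n "Wf \<alpha> Z' L'"] inner_commute[of "Sm n (Wf \<alpha> Z' L')"] field_simps)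
  show ?thesis using all unfolding eqf eqd has_real_derivative_iff_has_vector_derivative .
qed


lemma exp_decay:
  fixes V Vd :: "real \<Rightarrow> real" and E :: "real set"
  assumes cont: "continuous_on {0..} V"
    and fin: "\<And>T. finite (E \<inter> {0..T})"
    and der: "\<And>t. t > 0 \<Longrightarrow> t \<notin> E \<Longrightarrow> (V has_real_derivative Vd t) (at t)"
    and bnd: "\<And>t. t \<ge> 0 \<Longrightarrow> Vd t \<le> - \<kappa> * V t"
    and T0: "T \<ge> 0"
  shows "V T \<le> V 0 * exp (- \<kappa> * T)"
proof -
  define h where "h s = V s * exp (\<kappa> * s)" for s
  define h' where "h' s = Vd s * exp (\<kappa> * s) + V s * (\<kappa> * exp (\<kappa> * s))" for s
  have "(h' has_integral (h T - h 0)) {0..T}"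
  proof (rule fundamental_theorem_of_calculus_interior_strong[OF fin[of T] T0])
    fix x assume x: "x \<in> {0<..<T} - E \<inter> {0..T}"
    then have "x > 0" "x \<notin> E" by auto
    then have dV: "(V has_real_derivative Vd x) (at x)" by (rule der)
    have dE: "((\<lambda>s. exp (\<kappa> * s)) has_real_derivative (\<kappa> * exp (\<kappa> * x))) (at x)"
      by (auto intro!: derivative_eq_intros)
    have "(h has_real_derivative h' x) (at x)"
      unfolding h_def h'_def using DERIV_mult[OF dV dE] by (simp add: algebra_simps)
    then show "(h has_vector_derivative h' x) (at x)"
      by (simp add: has_real_derivative_iff_has_vector_derivative)
  next
    have "continuous_on {0..T} V" using cont by (rule continuous_on_subset) auto
    then show "continuous_on {0..T} h" unfolding h_def by (intro continuous_intros)
  qed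
  moreover have "h' s \<le> 0" if "s \<in> {0..T}" for s
  proof -
    have "Vd s \<le> - \<kappa> * V s" using that bnd by auto
    then have "Vd s * exp (\<kappa> * s) \<le> (- \<kappa> * V s) * exp (\<kappa> * s)" by (intro mult_right_mono) auto
    then show ?thesis unfolding h'_def by (simp add: algebra_simps)
  qed
  ultimately have "h T - h 0 \<le> 0" using has_integral_le[of h' "h T - h 0" "{0..T}" "\<lambda>_. 0" 0] has_integral_0 by auto
  then have "V T * exp (\<kappa> * T) \<le> V 0" unfolding h_def by simp
  then have "V T * exp (\<kappa> * T) * exp (- \<kappa> * T) \<le> V 0 * exp (- \<kappa> * T)" by (intro mult_right_mono) auto
  then show ?thesis by (simp add: exp_minus field_simps)
qed


lemma const_deriv0:
  fixes f :: "real \<Rightarrow> 'a::euclidean_space"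
  assumes cont: "continuous_on {0..} f"
    and fin: "\<And>T. finite (E \<inter> {0..T})"
    and der: "\<And>t. t > 0 \<Longrightarrow> t \<notin> E \<Longrightarrow> (f has_vector_derivative 0) (at t)"
    and T0: "T \<ge> 0"
  shows "f T = f 0"
proof -
  have "((\<lambda>_. 0) has_integral (f T - f 0)) {0..T}"
  proof (rule fundamental_theorem_of_calculus_interior_strong[OF fin[of T] T0])
    fix x assume x: "x \<in> {0<..<T} - E \<inter> {0..T}"
    then show "(f has_vector_derivative 0) (at x)" using der by auto
  next
    show "continuous_on {0..T} f" using cont by (rule continuous_on_subset) auto
  qed
  then have "f T - f 0 = 0" using has_integral_unique has_integral_0 by blast
  then show ?thesis by simp
qed

lemma cont_ipr:
  fixes U V :: "real \<Rightarrow> nat \<Rightarrow> 'a::real_inner"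
  assumes "\<And>i. i < n \<Longrightarrow> continuous_on S (\<lambda>s. U s i)" "\<And>i. i < n \<Longrightarrow> continuous_on S (\<lambda>s. V s i)"
  shows "continuous_on S (\<lambda>s. ipr n (U s) (V s))"
  unfolding ipr_def by (intro continuous_on_sum continuous_on_inner assms) auto

lemma cont_Sm:
  fixes U :: "real \<Rightarrow> nat \<Rightarrow> 'a::real_normed_vector"
  assumes "\<And>i. i < n \<Longrightarrow> continuous_on S (\<lambda>s. U s i)"
  shows "continuous_on S (\<lambda>s. Sm n (U s))"
  unfolding Sm_def by (intro continuous_on_sum assms) auto

lemma cont_Vf:
  fixes X L Z :: "real \<Rightarrow> nat \<Rightarrow> 'a::real_inner"
  assumes cX: "\<And>i. i < n \<Longrightarrow> continuous_on S (\<lambda>s. X s i)"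
    and cL: "\<And>i. i < n \<Longrightarrow> continuous_on S (\<lambda>s. L s i)"
    and cZ: "\<And>i. i < n \<Longrightarrow> continuous_on S (\<lambda>s. Z s i)" and a0: "\<alpha> \<noteq> 0"
  shows "continuous_on S (\<lambda>s. Vf n \<alpha> e (X s) (L s) (Z s))"
proof -
  have cW: "continuous_on S (\<lambda>s. Wf \<alpha> (Z s) (L s) i)" if "i < n" for i
    unfolding Wf_def using cZ[OF that] cL[OF that] by (intro continuous_intros)
  show ?thesis unfolding Vf_def
    by (intro continuous_intros cont_ipr cont_Sm cX cL cZ cW) (auto simp: a0)
qed

lemma comp_le_sqrt: fixes u :: "nat \<Rightarrow> 'a::real_inner"
  assumes "i < n" shows "norm (u i) \<le> sqrt (ipr n u u)"
proof -
  have "(norm (u i))^2 \<le> ipr n u u" unfolding ipr_def power2_norm_eq_inner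
    using assms by (intro member_le_sum) auto
  then show ?thesis by (simp add: real_le_rsqrt)
qed

lemma norm_bound:
  fixes X L Z :: "nat \<Rightarrow> 'a::real_inner"
  assumes a0: "\<alpha> > 0" and n0: "n > 0" and sZ: "Sm n Z = 0" and R0: "R \<ge> 0"
    and hX: "ipr n X X \<le> R" and hW: "ipr n (pp n (Wf \<alpha> Z L)) (pp n (Wf \<alpha> Z L)) \<le> R"
    and hS: "inner (Sm n (Wf \<alpha> Z L)) (Sm n (Wf \<alpha> Z L)) / n \<le> R" and hL: "ipr n (pp n L) (pp n L) \<le> R"
  shows "(\<Sum>i<n. norm (X i) + norm (L i) + norm (Z i)) \<le> n * (5 + 1 / \<alpha> + \<alpha>) * sqrt R"
proof -
  define W where "W = Wf \<alpha> Z L"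
  define SW where "SW = Sm n W"
  have SW: "SW = \<alpha> *\<^sub>R Sm n L" unfolding SW_def W_def Wf_def using sZ by (simp add: Sm_rules)
  have mono: "sqrt x \<le> sqrt R" if "x \<le> R" for x using that by simp
  have nS: "norm ((1 / real n) *\<^sub>R SW) \<le> sqrt R"
  proof -
    have "(norm ((1 / real n) *\<^sub>R SW))^2 = inner SW SW / n^2" using n0
      by (simp add: power2_norm_eq_inner[symmetric] power_divide power_mult_distrib)
    also have "\<dots> \<le> inner SW SW / n" using n0 by (intro divide_left_mono) (auto simp: power2_eq_square)
    also have "\<dots> \<le> R" using hS unfolding SW_def W_def .
    finally show ?thesis by (simp add: real_le_rsqrt)
  qed
  have per: "norm (X i) + norm (L i) + norm (Z i) \<le> (5 + 1 / \<alpha> + \<alpha>) * sqrt R" if i: "i < n" for i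
  proof -
    have x: "norm (X i) \<le> sqrt R" using comp_le_sqrt[OF i, of X] mono[OF hX] by linarith
    have pl: "norm (pp n L i) \<le> sqrt R" using comp_le_sqrt[OF i, of "pp n L"] mono[OF hL] by linarith
    have pw: "norm (pp n W i) \<le> sqrt R" using comp_le_sqrt[OF i, of "pp n W"] mono[OF hW[folded W_def]] by linarith
    have Li: "L i = pp n L i + (1 / \<alpha>) *\<^sub>R ((1 / real n) *\<^sub>R SW)" unfolding pp_def SW using a0 by simp
    have l: "norm (L i) \<le> (1 + 1 / \<alpha>) * sqrt R"
    proof -
      have "norm (L i) \<le> norm (pp n L i) + (1 / \<alpha>) * norm ((1 / real n) *\<^sub>R SW)"
        unfolding Li using a0 by (metis norm_scaleR norm_triangle_ineq abs_of_pos zero_less_divide_1_iff)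
      also have "\<dots> \<le> sqrt R + (1 / \<alpha>) * sqrt R" using pl nS a0 by (intro add_mono mult_left_mono) auto
      finally show ?thesis by (simp add: algebra_simps)
    qed
    have Wi: "W i = pp n W i + (1 / real n) *\<^sub>R SW" unfolding pp_def SW_def by simp
    have w: "norm (W i) \<le> 2 * sqrt R"
    proof -
      have "norm (W i) \<le> norm (pp n W i) + norm ((1 / real n) *\<^sub>R SW)" unfolding Wi by (rule norm_triangle_ineq)
      then show ?thesis using pw nS by linarith
    qed
    have Zi: "Z i = W i - \<alpha> *\<^sub>R L i" unfolding W_def Wf_def by simp
    have z: "norm (Z i) \<le> 2 * sqrt R + \<alpha> * ((1 + 1 / \<alpha>) * sqrt R)"
    proof -
      have "norm (Z i) \<le> norm (W i) + \<alpha> * norm (L i)" unfolding Zi using a0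
        by (metis norm_scaleR norm_triangle_ineq4 abs_of_pos)
      also have "\<dots> \<le> 2 * sqrt R + \<alpha> * ((1 + 1 / \<alpha>) * sqrt R)" using w l a0 by (intro add_mono mult_left_mono) auto
      finally show ?thesis .
    qed
    have "norm (X i) + norm (L i) + norm (Z i) \<le> sqrt R + (1 + 1 / \<alpha>) * sqrt R + (2 * sqrt R + \<alpha> * ((1 + 1 / \<alpha>) * sqrt R))"
      using x l z by linarith
    also have "\<dots> = (5 + 1 / \<alpha> + \<alpha>) * sqrt R" using a0 by (simp add: field_simps)
    finally show ?thesis .
  qed
  have "(\<Sum>i<n. norm (X i) + norm (L i) + norm (Z i)) \<le> (\<Sum>i<n. (5 + 1 / \<alpha> + \<alpha>) * sqrt R)"
    by (intro sum_mono per) auto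
  then show ?thesis by simp
qed


theorem corollary2:
  fixes n :: nat
    and f :: "nat \<Rightarrow> 'a::euclidean_space \<Rightarrow> real"
    and gf :: "nat \<Rightarrow> 'a \<Rightarrow> 'a"
    and \<mu>i li :: "nat \<Rightarrow> real"
    and b :: 'a and bb :: "nat \<Rightarrow> 'a"
    and a :: "real \<Rightarrow> nat \<Rightarrow> nat \<Rightarrow> real"
    and \<phi> \<alpha> \<beta> :: real
    and x lam z :: "real \<Rightarrow> nat \<Rightarrow> 'a"
  assumes n2: "n \<ge> 2"
    and grad: "\<And>i y. i < n \<Longrightarrow> GDERIV (f i) y :> gf i y"
    and sconv: "\<And>i. i < n \<Longrightarrow> \<mu>i i > 0 \<and> strongly_convex (\<mu>i i) (f i)"
    and smooth: "\<And>i. i < n \<Longrightarrow> li i > 0 \<and> lipschitz_on (li i) UNIV (gf i)"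
    and opt_exists: "\<exists>xo. optimal n f b xo"
    and bb_sum: "(\<Sum>i<n. bb i) = b"
    and adj_nonneg: "\<And>t i j. t \<ge> 0 \<Longrightarrow> i < n \<Longrightarrow> j < n \<Longrightarrow> a t i j \<ge> 0"
    and adj_bounded: "\<exists>B. \<forall>t\<ge>0. \<forall>i<n. \<forall>j<n. a t i j \<le> B"
    and adj_pwc: "piecewise_constant a"
    and sc: "\<And>t. t \<ge> 0 \<Longrightarrow> strongly_connected n (a t)"
    and wb: "\<And>t. t \<ge> 0 \<Longrightarrow> weight_balanced n (a t)"
    and phi: "\<phi> > 0"
    and alpha1: "\<alpha> \<ge> 1 / 2"
    and alpha2: "\<alpha> \<ge> ((\<phi>\<^sup>2 + 3 * \<phi> + 3) + (Max (li ` {..<n}))\<^sup>2 + 3 / 2 - Min (\<mu>i ` {..<n}))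
                      / ((\<phi> + 1) * Min (\<mu>i ` {..<n}))"
    and beta: "2 * \<phi> * \<alpha> * (INF s \<in> a ` {0..}. eta2 (lap_hat n s)) * \<beta>
                 \<ge> 2 * (\<phi> + 1)\<^sup>2 * \<alpha>\<^sup>2 + 1"
    and traj: "IDEA_trajectory n gf bb \<alpha> \<beta> a x lam z"
    and z0: "(\<Sum>i<n. z 0 i) = 0"
  shows "\<exists>xs ls zs. \<exists>C \<gamma>. \<gamma> > 0 \<and>
           (\<forall>t\<ge>0. (\<Sum>i<n. norm (x t i - xs i) + norm (lam t i - ls i) + norm (z t i - zs i))
                      \<le> C * exp (- \<gamma> * t)) \<and>
           optimal n f b xs \<and>
           (\<forall>y. optimal n f b y \<longrightarrow> (\<forall>i<n. y i = xs i))"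
proof -
  have n0: "n > 0" using n2 by simp
  have nr: "real n > 0" using n0 by simp
  have a0: "\<alpha> > 0" using alpha1 by simp
  define \<mu> where "\<mu> = Min (\<mu>i ` {..<n})"
  define l where "l = Max (li ` {..<n})"
  have finM: "finite (\<mu>i ` {..<n})" "\<mu>i ` {..<n} \<noteq> {}" using n0 by auto
  have finL: "finite (li ` {..<n})" "li ` {..<n} \<noteq> {}" using n0 by auto
  have mule: "\<mu> \<le> \<mu>i i" if "i < n" for i unfolding \<mu>_def using finM that by (intro Min_le) auto
  have mupos: "\<mu> > 0"
  proof -
    have "\<mu> \<in> \<mu>i ` {..<n}" unfolding \<mu>_def using finM by (rule Min_in)
    then obtain i where "i < n" "\<mu> = \<mu>i i" by auto
    then show ?thesis using sconv by auto
  qed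
  have lge: "li i \<le> l" if "i < n" for i unfolding l_def using finL that by (intro Max_ge) auto
  have lpos: "l > 0" using lge[OF n0] smooth[OF n0] by linarith
  obtain xo where opt: "optimal n f b xo" using opt_exists by blast
  define ls where "ls = - gf 0 (xo 0)"
  have kk: "gf i (xo i) = - ls" if "i < n" for i using kkt[OF grad opt that] unfolding ls_def by simp
  define zs where "zs i = xo i - bb i" for i
  define X where "X s i = x s i - xo i" for s i
  define L where "L s i = lam s i - ls" for s i
  define Z where "Z s i = z s i - zs i" for s i
  define G where "G s i = gf i (x s i) - gf i (xo i)" for s i
  have nnT: "\<And>i j. i < n \<Longrightarrow> j < n \<Longrightarrow> a s i j \<ge> 0" if "s \<ge> 0" for s using adj_nonneg that by auto
  define \<eta> where "\<eta> = (INF s \<in> a ` {0..}. eta2 (lap_hat n s))"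
  have eta_nn: "eta2 (lap_hat n (a s)) \<ge> 0" if "s \<ge> 0" for s
    using eta2_props(1)[OF n2 wb[OF that] nnT[OF that] sc[OF that]] .
  have bdd: "bdd_below ((\<lambda>s. eta2 (lap_hat n s)) ` a ` {0..})"
    using eta_nn by (auto intro!: bdd_belowI[of _ 0])
  have eta_le: "\<eta> \<le> eta2 (lap_hat n (a s))" if "s \<ge> 0" for s
    unfolding \<eta>_def using bdd that by (auto intro!: cINF_lower)
  have eta0: "\<eta> \<ge> 0" unfolding \<eta>_def using eta_nn by (auto intro!: cINF_greatest)
  have bbig: "\<beta> * \<eta> > \<alpha>"
  proof -
    have "(\<phi> + 1)^2 \<ge> \<phi>" by (simp add: power2_eq_square algebra_simps) (metis add_nonneg_nonneg less_eq_real_def mult_nonneg_nonneg phi zero_le_one)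
    then have "2 * (\<phi> + 1)^2 * \<alpha>^2 \<ge> 2 * \<phi> * \<alpha>^2" by (intro mult_right_mono) auto
    then have "(2 * \<phi> * \<alpha>) * \<alpha> < (2 * \<phi> * \<alpha>) * (\<beta> * \<eta>)" using beta unfolding \<eta>_def[symmetric]
      by (simp add: power2_eq_square algebra_simps)
    moreover have "2 * \<phi> * \<alpha> > 0" using phi a0 by simp
    ultimately show ?thesis using mult_less_cancel_left_pos by blast
  qed
  have b0: "\<beta> > 0"
  proof (rule ccontr)
    assume "\<not> \<beta> > 0"
    then have "\<beta> * \<eta> \<le> 0" using eta0 by (simp add: mult_nonpos_nonneg)
    then show False using bbig a0 by linarith
  qed
  have amu: "\<alpha> * \<mu> > 5/4"
  proof (rule ccontr)
    assume H: "\<not> \<alpha> * \<mu> > 5/4"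
    have "\<alpha> * ((\<phi> + 1) * \<mu>) \<ge> (\<phi>^2 + 3 * \<phi> + 3) + l^2 + 3 / 2 - \<mu>"
      using alpha2 phi mupos unfolding \<mu>_def[symmetric] l_def[symmetric] by (simp add: divide_le_eq)
    moreover have "\<alpha> * ((\<phi> + 1) * \<mu>) = (\<phi> + 1) * (\<alpha> * \<mu>)" by (simp add: algebra_simps)
    moreover have "(\<phi> + 1) * (\<alpha> * \<mu>) \<le> (\<phi> + 1) * (5/4)" using H phi by (intro mult_left_mono) auto
    moreover have "\<mu> \<le> 5/2"
    proof -
      have "\<mu> / 2 \<le> \<alpha> * \<mu>" using alpha1 mupos by (simp add: mult_right_mono)
      then show ?thesis using H by linarith
    qed
    moreover have "l^2 \<ge> 0" "\<phi>^2 \<ge> 0" by auto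
    ultimately show False using phi by (simp add: algebra_simps)
  qed
  define K2 where "K2 = \<alpha>^2 * l^2 + 1 + \<alpha>"
  have K2: "K2 > 0"
  proof -
    have "\<alpha>^2 * l^2 \<ge> 0" by simp
    then show ?thesis unfolding K2_def using a0 by linarith
  qed
  define e where "e = min (1 / (2 * (\<alpha> + 1))) ((\<alpha> * \<mu> - 5/4) / (2 * K2))"
  have e0: "e > 0" unfolding e_def using a0 amu K2 by auto
  have D0: "\<alpha> * \<mu> - 5/4 - e * (\<alpha>^2 * l^2 + 1 + \<alpha>) > 0"
  proof -
    have "e \<le> (\<alpha> * \<mu> - 5/4) / (2 * K2)" unfolding e_def by simp
    then have "e * K2 \<le> (\<alpha> * \<mu> - 5/4) / 2" using K2 by (simp add: le_divide_eq algebra_simps)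
    moreover have "(\<alpha> * \<mu> - 5/4) / 2 < \<alpha> * \<mu> - 5/4" using amu by simp
    ultimately show ?thesis unfolding K2_def by linarith
  qed
  have e2: "e^2 \<le> 1 / (4 * \<alpha>)"
  proof -
    have "e \<le> 1 / (2 * (\<alpha> + 1))" unfolding e_def by simp
    then have "e^2 \<le> (1 / (2 * (\<alpha> + 1)))^2" using e0 by (intro power_mono) auto
    also have "\<dots> = 1 / (4 * (\<alpha> + 1)^2)" by (simp add: power_divide power2_eq_square algebra_simps)
    also have "\<dots> \<le> 1 / (4 * \<alpha>)"
    proof -
      have ex: "(\<alpha> + 1)^2 = \<alpha>^2 + 2 * \<alpha> + 1" by (simp add: power2_eq_square algebra_simps)
      have "\<alpha>^2 \<ge> 0" by simp
      then have le: "4 * \<alpha> \<le> 4 * (\<alpha> + 1)^2" using ex a0 by linarith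
      have "0 < 4 * (\<alpha> + 1)^2 * (4 * \<alpha>)" using a0 by (intro mult_pos_pos) auto
      then show ?thesis using divide_left_mono[OF le, of 1] by simp
    qed
    finally show ?thesis .
  qed
  define E where "E = {t. \<not> locally_const_at a t}"
  have finE: "finite (E \<inter> {0..T})" for T
  proof -
    have "E \<inter> {0..T} = {t \<in> {0..T}. \<not> locally_const_at a t}" unfolding E_def by auto
    then show ?thesis using adj_pwc unfolding piecewise_constant_def by simp
  qed
  have contx: "continuous_on {0..} (\<lambda>t. x t i)" "continuous_on {0..} (\<lambda>t. lam t i)" "continuous_on {0..} (\<lambda>t. z t i)"
    if "i < n" for i using traj that unfolding IDEA_trajectory_def by auto
  have ode: "((\<lambda>s. x s i) has_vector_derivative
            (- \<alpha> *\<^sub>R (gf i (x t i) + lam t i) - (x t i - bb i - z t i))) (at t) \<and>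
        ((\<lambda>s. lam s i) has_vector_derivative
            (x t i - bb i - z t i - \<beta> *\<^sub>R (\<Sum>j<n. lap n (a t) i j *\<^sub>R lam t j))) (at t) \<and>
        ((\<lambda>s. z s i) has_vector_derivative
            ((\<alpha> * \<beta>) *\<^sub>R (\<Sum>j<n. lap n (a t) i j *\<^sub>R lam t j))) (at t)"
    if "t > 0" "t \<notin> E" "i < n" for t i
    using traj that unfolding IDEA_trajectory_def E_def by blast
  have sumz: "(\<Sum>i<n. z s i) = 0" if "s \<ge> 0" for s
  proof -
    have "(\<lambda>t. \<Sum>i<n. z t i) s = (\<lambda>t. \<Sum>i<n. z t i) 0"
    proof (rule const_deriv0[OF _ finE _ that])
      show "continuous_on {0..} (\<lambda>t. \<Sum>i<n. z t i)" using contx by (intro continuous_on_sum) auto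
    next
      fix t :: real assume t: "t > 0" "t \<notin> E"
      have "((\<lambda>s. \<Sum>i<n. z s i) has_vector_derivative (\<Sum>i<n. (\<alpha> * \<beta>) *\<^sub>R (\<Sum>j<n. lap n (a t) i j *\<^sub>R lam t j))) (at t)"
        using ode[OF t] by (intro has_vector_derivative_sum) auto
      moreover have "(\<Sum>i<n. (\<alpha> * \<beta>) *\<^sub>R (\<Sum>j<n. lap n (a t) i j *\<^sub>R lam t j)) = 0"
      proof -
        have "(\<Sum>i<n. (\<alpha> * \<beta>) *\<^sub>R (\<Sum>j<n. lap n (a t) i j *\<^sub>R lam t j)) = (\<alpha> * \<beta>) *\<^sub>R Sm n (Lv n (a t) (lam t))"
          unfolding Sm_def Lv_def by (simp add: scaleR_sum_right)
        also have "\<dots> = 0" using Sm_Lv[OF wb[of t], of "lam t"] t by simp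
        finally show ?thesis .
      qed
      ultimately show "((\<lambda>t. \<Sum>i<n. z t i) has_vector_derivative 0) (at t)" by simp
    qed
    then show ?thesis using z0 by simp
  qed
  have SmZ: "Sm n (Z s) = 0" if "s \<ge> 0" for s
  proof -
    have "Sm n (Z s) = (\<Sum>i<n. z s i) - ((\<Sum>i<n. xo i) - (\<Sum>i<n. bb i))"
      unfolding Sm_def Z_def zs_def by (simp add: sum_subtractf)
    then show ?thesis using sumz[OF that] opt bb_sum unfolding optimal_def feasible_def by simp
  qed
  have hG1: "inner (X s i) (G s i) \<ge> \<mu> * (norm (X s i))^2" if "i < n" for s i
  proof -
    have "inner (x s i - xo i) (gf i (x s i) - gf i (xo i)) \<ge> \<mu>i i * (norm (x s i - xo i))^2"
      using sc_mono[OF conjunct2[OF sconv[OF that]] grad[OF that] grad[OF that]] .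
    moreover have "\<mu> * (norm (x s i - xo i))^2 \<le> \<mu>i i * (norm (x s i - xo i))^2"
      using mule[OF that] by (intro mult_right_mono) auto
    ultimately show ?thesis unfolding X_def G_def by linarith
  qed
  have hG2: "norm (G s i) \<le> l * norm (X s i)" if "i < n" for s i
  proof -
    have "dist (gf i (x s i)) (gf i (xo i)) \<le> li i * dist (x s i) (xo i)"
      using smooth[OF that] by (intro lipschitz_onD) auto
    moreover have "li i * dist (x s i) (xo i) \<le> l * dist (x s i) (xo i)"
      using lge[OF that] by (intro mult_right_mono) auto
    ultimately show ?thesis unfolding X_def G_def dist_norm by linarith
  qed
  have Lvrel: "Lv n (a t) (L t) i = (\<Sum>j<n. lap n (a t) i j *\<^sub>R lam t j)" if "i < n" for t i
  proof -
    have "Lv n (a t) (L t) i = (\<Sum>j<n. lap n (a t) i j *\<^sub>R lam t j) - (\<Sum>j<n. lap n (a t) i j) *\<^sub>R ls"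
      unfolding Lv_def L_def by (simp add: scaleR_diff_right sum_subtractf scaleR_sum_left)
    then show ?thesis using lap_row_sum[OF that] by simp
  qed
  have dX: "((\<lambda>s. X s i) has_vector_derivative (- \<alpha> *\<^sub>R (G t i + L t i) - (X t i - Z t i))) (at t)"
    if t: "t > 0" "t \<notin> E" and i: "i < n" for t i
  proof -
    have e: "- \<alpha> *\<^sub>R (gf i (x t i) + lam t i) - (x t i - bb i - z t i) = - \<alpha> *\<^sub>R (G t i + L t i) - (X t i - Z t i)"
      unfolding X_def G_def L_def Z_def zs_def using kk[OF i] by (simp add: algebra_simps)
    have f: "(\<lambda>s. X s i) = (\<lambda>s. x s i - xo i)" by (simp add: X_def fun_eq_iff)
    show ?thesis unfolding f has_vector_derivative_diff_const using ode[OF t i] e by simp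
  qed
  have dL: "((\<lambda>s. L s i) has_vector_derivative (X t i - Z t i - \<beta> *\<^sub>R Lv n (a t) (L t) i)) (at t)"
    if t: "t > 0" "t \<notin> E" and i: "i < n" for t i
  proof -
    have e: "x t i - bb i - z t i - \<beta> *\<^sub>R (\<Sum>j<n. lap n (a t) i j *\<^sub>R lam t j) = X t i - Z t i - \<beta> *\<^sub>R Lv n (a t) (L t) i"
      unfolding Lvrel[OF i] unfolding X_def Z_def zs_def by (simp add: algebra_simps)
    have f: "(\<lambda>s. L s i) = (\<lambda>s. lam s i - ls)" by (simp add: L_def fun_eq_iff)
    show ?thesis unfolding f has_vector_derivative_diff_const using ode[OF t i] e by simp
  qed
  have dZ: "((\<lambda>s. Z s i) has_vector_derivative ((\<alpha> * \<beta>) *\<^sub>R Lv n (a t) (L t) i)) (at t)"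
    if t: "t > 0" "t \<notin> E" and i: "i < n" for t i
  proof -
    have f: "(\<lambda>s. Z s i) = (\<lambda>s. z s i - zs i)" by (simp add: Z_def fun_eq_iff)
    show ?thesis unfolding f has_vector_derivative_diff_const Lvrel[OF i] using ode[OF t i] by simp
  qed
  define \<kappa> where "\<kappa> = min (min (4 * (\<alpha> * \<mu> - 5/4 - e * (\<alpha>^2 * l^2 + 1 + \<alpha>)) / 3) \<alpha>) (min (2 * \<alpha> * e / 3) (2 * (\<beta> * \<eta> - \<alpha>)))"
  define V where "V s = Vf n \<alpha> e (X s) (L s) (Z s)" for s
  define Vd where "Vd s = DV n \<alpha> e (X s) (L s) (Z s) (\<lambda>i. - \<alpha> *\<^sub>R (G s i + L s i) - (X s i - Z s i))
      (\<lambda>i. X s i - Z s i - \<beta> *\<^sub>R Lv n (a s) (L s) i) (\<lambda>i. (\<alpha> * \<beta>) *\<^sub>R Lv n (a s) (L s) i)" for s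
  have be: "\<beta> * \<eta> - \<alpha> > 0" using bbig by simp
  have SL: "Vd s \<le> - \<kappa> * V s \<and>
     V s \<ge> ipr n (X s) (X s) / 4 + ipr n (pp n (Wf \<alpha> (Z s) (L s))) (pp n (Wf \<alpha> (Z s) (L s))) / \<alpha>
           + inner (Sm n (Wf \<alpha> (Z s) (L s))) (Sm n (Wf \<alpha> (Z s) (L s))) / (4 * \<alpha> * n) + \<alpha> * ipr n (pp n (L s)) (pp n (L s))
     \<and> \<kappa> > 0" if s: "s \<ge> 0" for s
  proof -
    note ST1 = state_lyap(1)[where X="X s" and L="L s" and Z="Z s" and G="G s" and a="a s" and \<eta>=\<eta> and \<mu>=\<mu>
        and l=l and e=e and \<alpha>=\<alpha> and \<beta>=\<beta> and n=n,
        OF n2 a0 less_imp_le[OF b0] wb[OF s] nnT[OF s] sc[OF s] eta_le[OF s] SmZ[OF s] hG1 hG2 less_imp_le[OF lpos] e0 D0 be e2]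
    note ST2 = state_lyap(2)[where X="X s" and L="L s" and Z="Z s" and G="G s" and a="a s" and \<eta>=\<eta> and \<mu>=\<mu>
        and l=l and e=e and \<alpha>=\<alpha> and \<beta>=\<beta> and n=n,
        OF n2 a0 less_imp_le[OF b0] wb[OF s] nnT[OF s] sc[OF s] eta_le[OF s] SmZ[OF s] hG1 hG2 less_imp_le[OF lpos] e0 D0 be e2]
    note ST3 = state_lyap(3)[where X="X s" and Z="Z s" and G="G s" and a="a s" and \<eta>=\<eta> and \<mu>=\<mu>
        and l=l and e=e and \<alpha>=\<alpha> and \<beta>=\<beta> and n=n,
        OF n2 a0 less_imp_le[OF b0] wb[OF s] nnT[OF s] sc[OF s] eta_le[OF s] SmZ[OF s] hG1 hG2 less_imp_le[OF lpos] e0 D0 be e2]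
    note ST = ST1 ST2 ST3
    show ?thesis using ST unfolding V_def Vd_def \<kappa>_def by blast
  qed
  have kpos: "\<kappa> > 0" using SL[of 0] by simp
  have Vcont: "continuous_on {0..} V"
    unfolding V_def X_def L_def Z_def using contx a0
    by (intro cont_Vf continuous_on_diff continuous_on_const) auto
  have Vder: "(V has_real_derivative Vd t) (at t)" if t: "t > 0" "t \<notin> E" for t
    unfolding V_def Vd_def using a0 by (intro Vf_deriv dX[OF t] dL[OF t] dZ[OF t]) auto
  have decay: "V T \<le> V 0 * exp (- \<kappa> * T)" if "T \<ge> 0" for T
    using exp_decay[OF Vcont finE Vder _ that, of \<kappa>] SL by blast
  define c0 where "c0 = min (min (1/4) (1/\<alpha>)) (min (1 / (4 * \<alpha>)) \<alpha>)"
  have c0: "c0 > 0" unfolding c0_def using a0 by auto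
  define K where "K = 5 + 1 / \<alpha> + \<alpha>"
  have K0: "K \<ge> 0" unfolding K_def using a0 by simp
  have bnd: "(\<Sum>i<n. norm (X s i) + norm (L s i) + norm (Z s i)) \<le> n * K * sqrt (V s / c0)" if s: "s \<ge> 0" for s
  proof -
    define W where "W = Wf \<alpha> (Z s) (L s)"
    define q1 where "q1 = ipr n (X s) (X s)"
    define q2 where "q2 = ipr n (pp n W) (pp n W)"
    define q3 where "q3 = inner (Sm n W) (Sm n W) / n"
    define q4 where "q4 = ipr n (pp n (L s)) (pp n (L s))"
    have q: "q1 \<ge> 0" "q2 \<ge> 0" "q3 \<ge> 0" "q4 \<ge> 0" unfolding q1_def q2_def q3_def q4_def
      by (auto simp: ipr_self_nonneg)
    have low: "V s \<ge> q1 / 4 + q2 / \<alpha> + q3 / (4 * \<alpha>) + \<alpha> * q4"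
      using SL[OF s] unfolding q1_def q2_def q3_def q4_def W_def by (simp add: field_simps)
    have cc: "c0 \<le> 1/4" "c0 \<le> 1/\<alpha>" "c0 \<le> 1/(4*\<alpha>)" "c0 \<le> \<alpha>" unfolding c0_def by auto
    have c1: "c0 * q1 \<le> q1 / 4" using mult_right_mono[OF cc(1) q(1)] by simp
    have c2: "c0 * q2 \<le> q2 / \<alpha>" using mult_right_mono[OF cc(2) q(2)] by simp
    have c3: "c0 * q3 \<le> q3 / (4 * \<alpha>)" using mult_right_mono[OF cc(3) q(3)] by simp
    have c4: "c0 * q4 \<le> \<alpha> * q4" using mult_right_mono[OF cc(4) q(4)] by simp
    have t1: "q1 / 4 \<ge> 0" "q2 / \<alpha> \<ge> 0" "q3 / (4 * \<alpha>) \<ge> 0" "\<alpha> * q4 \<ge> 0" using q a0 by auto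
    have "c0 * q1 \<le> V s" "c0 * q2 \<le> V s" "c0 * q3 \<le> V s" "c0 * q4 \<le> V s"
      using low c1 c2 c3 c4 t1 by linarith+
    then have r: "q1 \<le> V s / c0" "q2 \<le> V s / c0" "q3 \<le> V s / c0" "q4 \<le> V s / c0"
      using c0 by (simp_all add: le_divide_eq mult.commute)
    have R0: "V s / c0 \<ge> 0" using r(1) q(1) by linarith
    show ?thesis using norm_bound[OF a0 n0 SmZ[OF s] R0 r(1)[unfolded q1_def] r(2)[unfolded q2_def W_def]
        r(3)[unfolded q3_def W_def] r(4)[unfolded q4_def]] unfolding K_def by simp
  qed
  have V0: "V 0 \<ge> 0"
  proof -
    have "V 0 \<ge> ipr n (X 0) (X 0) / 4 + ipr n (pp n (Wf \<alpha> (Z 0) (L 0))) (pp n (Wf \<alpha> (Z 0) (L 0))) / \<alpha>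
           + inner (Sm n (Wf \<alpha> (Z 0) (L 0))) (Sm n (Wf \<alpha> (Z 0) (L 0))) / (4 * \<alpha> * n) + \<alpha> * ipr n (pp n (L 0)) (pp n (L 0))"
      using SL[of 0] by simp
    moreover have "ipr n (X 0) (X 0) / 4 \<ge> 0" "ipr n (pp n (Wf \<alpha> (Z 0) (L 0))) (pp n (Wf \<alpha> (Z 0) (L 0))) / \<alpha> \<ge> 0"
      "inner (Sm n (Wf \<alpha> (Z 0) (L 0))) (Sm n (Wf \<alpha> (Z 0) (L 0))) / (4 * \<alpha> * n) \<ge> 0" "\<alpha> * ipr n (pp n (L 0)) (pp n (L 0)) \<ge> 0"
      using a0 ipr_self_nonneg[of n "pp n (Wf \<alpha> (Z 0) (L 0))"] ipr_self_nonneg[of n "pp n (L 0)"] ipr_self_nonneg[of n "X 0"]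
      by auto
    ultimately show ?thesis by linarith
  qed
  have sq_exp: "sqrt (exp y) = exp (y / 2)" for y :: real
  proof (rule real_sqrt_unique)
    show "(exp (y / 2))^2 = exp y" by (simp add: power2_eq_square exp_add[symmetric])
  qed simp
  define C where "C = n * K * sqrt (V 0 / c0)"
  have main: "(\<Sum>i<n. norm (X t i) + norm (L t i) + norm (Z t i)) \<le> C * exp (- (\<kappa> / 2) * t)" if t: "t \<ge> 0" for t
  proof -
    have "V t / c0 \<le> V 0 / c0 * exp (- \<kappa> * t)" using decay[OF t] c0 by (simp add: divide_right_mono field_simps)
    then have "sqrt (V t / c0) \<le> sqrt (V 0 / c0 * exp (- \<kappa> * t))" by simp
    also have "\<dots> = sqrt (V 0 / c0) * sqrt (exp (- \<kappa> * t))" by (rule real_sqrt_mult)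
    also have "\<dots> = sqrt (V 0 / c0) * exp (- (\<kappa> / 2) * t)" unfolding sq_exp by simp
    finally have "n * K * sqrt (V t / c0) \<le> n * K * (sqrt (V 0 / c0) * exp (- (\<kappa> / 2) * t))"
      using K0 by (intro mult_left_mono) auto
    then show ?thesis using bnd[OF t] unfolding C_def by (simp add: mult.assoc)
  qed
  show ?thesis
  proof (intro exI conjI allI impI)
    show "\<kappa> / 2 > 0" using kpos by simp
    show "optimal n f b xo" by (rule opt)
  next
    fix t :: real assume t: "t \<ge> 0"
    show "(\<Sum>i<n. norm (x t i - xo i) + norm (lam t i - ls) + norm (z t i - zs i)) \<le> C * exp (- (\<kappa> / 2) * t)"
      using main[OF t] unfolding X_def L_def Z_def .
  next
    fix y i assume "optimal n f b y" "i < n"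
    then show "y i = xo i" using uniq[OF grad sconv opt] by blast
  qed
qed

end
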